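(* Let $A$ be a set of $n$ arms with best arm $a^\star$, and assume there is a unique $\epsilon$-best arm in $A$ (every arm other than $a^\star$ is $\epsilon$-far from $a^\star$). Then for all $\delta\le 0.05$ and $n\ge\max\{1/\delta^4,10^5\}$, \textsc{Simple Approximate Best Arm} $(\epsilon,\delta)$-learns a best arm with sample complexity at most $\frac{4n}{\epsilon^2}\log\frac{1}{\delta}$.
   Context: Setting: a set $A$ of $n$ arms; each arm $a$ has an unknown distribution supported on $[0,1]$ with mean $\mu(a)$; sampling $a$ returns an independent draw. $a^\star\in\arg\max_a\mu(a)$. An arm $a$ is $\eta$-close to $a^\star$ if $\mu(a^\star)-\mu(a)\le\eta$ and $\eta$-far otherwise; an $\epsilon$-best arm is one that is $\epsilon$-close to $a^\star$. An algorithm $(\epsilon,\delta)$-learns a best arm if it outputs an $\epsilon$-best arm with probability at least $1-\delta$; its sample complexity is the total number of samples it takes (integer rounding is ignored). $\log$ is natural. \textsc{Na\"ive Elimination}$(B,\epsilon,\delta)$: sample every arm of $B$ $\frac{2}{\epsilon^2}\log\frac{|B|}{\delta}$ times and output the arm with largest empirical mean. \textsc{Aggressive Elimination}$(A_0,\epsilon,\delta)$, with $n=|A_0|$, $\phi(n)=\sqrt{6\log n/n^{3/4}}$ and $t(n)=\left\lceil\frac{\log n+4\log 2}{4\log(1/(\delta+\phi(n)))}\right\rceil$: for $i=0,\ldots,t(n)$, take $(i+1)\left\lceil\frac{2}{\epsilon^2}\log\frac1\delta\right\rceil$ fresh samples of each arm of $A_i$ and let $A_{i+1}$ be the $\lfloor|A_i|(\delta+\phi(n))\rfloor$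 arms of $A_i$ with largest empirical means; output $A_{t(n)+1}$. \textsc{Simple Approximate Best Arm}$(A,\epsilon,\delta)$: compute $A_T=$ \textsc{Aggressive Elimination}$(A,\epsilon,\delta/2)$ and output \textsc{Na\"ive Elimination}$(A_T,\epsilon,\delta/e)$. *)

theory Defs
  imports "HOL-Probability.Probability"
begin

text \<open>Arms are elements of a linearly ordered type 'a; the order is only used to
break ties deterministically. A run of the algorithm is a deterministic function of
an outcome omega :: 'a \<times> nat \<Rightarrow> real, where omega (a, j) is the j-th
independent sample of arm a. Fresh samples are taken by using fresh indices j.\<close>

definition arm_mean :: "('a \<Rightarrow> real measure) \<Rightarrow> 'a \<Rightarrow> real" where
  "arm_mean D a = (\<integral>x. x \<partial>(D a))"

definition sample_space :: "'a set \<Rightarrow> ('a \<Rightarrow> real measure) \<Rightarrow> ('a \<times> nat \<Rightarrow> real) measure" where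
  "sample_space A D = PiM (A \<times> UNIV) (\<lambda>(a, j). D a)"

definition emp_mean :: "('a \<times> nat \<Rightarrow> real) \<Rightarrow> 'a \<Rightarrow> nat \<Rightarrow> nat \<Rightarrow> real" where
  "emp_mean \<omega> a off k = (\<Sum>j\<in>{off..<off + k}. \<omega> (a, j)) / real k"

text \<open>Arms of B sorted by decreasing score f; sort_key is stable, so ties are broken by the order on arms.\<close>
definition rank_list :: "('a::linorder \<Rightarrow> real) \<Rightarrow> 'a set \<Rightarrow> 'a list" where
  "rank_list f B = sort_key (\<lambda>a. - f a) (sorted_list_of_set B)"

definition top_k :: "('a::linorder \<Rightarrow> real) \<Rightarrow> 'a set \<Rightarrow> nat \<Rightarrow> 'a set" where
  "top_k f B k = set (take k (rank_list f B))"

definition naive_N :: "real \<Rightarrow> real \<Rightarrow> nat \<Rightarrow> nat" where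
  "naive_N \<epsilon> \<delta> b = nat \<lceil>2 / \<epsilon>\<^sup>2 * ln (real b / \<delta>)\<rceil>"

definition naive_elim :: "('a \<times> nat \<Rightarrow> real) \<Rightarrow> 'a::linorder set \<Rightarrow> real \<Rightarrow> real \<Rightarrow> nat \<Rightarrow> 'a" where
  "naive_elim \<omega> B \<epsilon> \<delta> off =
     hd (rank_list (\<lambda>a. emp_mean \<omega> a off (naive_N \<epsilon> \<delta> (card B))) B)"

definition naive_samples :: "'a set \<Rightarrow> real \<Rightarrow> real \<Rightarrow> nat" where
  "naive_samples B \<epsilon> \<delta> = card B * naive_N \<epsilon> \<delta> (card B)"

definition phi :: "nat \<Rightarrow> real" where
  "phi n = sqrt (6 * ln (real n) / (real n) powr (3/4))"

definition t_rounds :: "real \<Rightarrow> nat \<Rightarrow> nat" where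
  "t_rounds \<delta> n = nat \<lceil>(ln (real n) + 4 * ln 2) / (4 * ln (1 / (\<delta> + phi n)))\<rceil>"

definition agg_m :: "real \<Rightarrow> real \<Rightarrow> nat" where
  "agg_m \<epsilon> \<delta> = nat \<lceil>2 / \<epsilon>\<^sup>2 * ln (1 / \<delta>)\<rceil>"

definition agg_off :: "real \<Rightarrow> real \<Rightarrow> nat \<Rightarrow> nat" where
  "agg_off \<epsilon> \<delta> i = (\<Sum>j<i. (j + 1) * agg_m \<epsilon> \<delta>)"

fun agg_set :: "('a \<times> nat \<Rightarrow> real) \<Rightarrow> 'a::linorder set \<Rightarrow> real \<Rightarrow> real \<Rightarrow> nat \<Rightarrow> 'a set" where
  "agg_set \<omega> A0 \<epsilon> \<delta> 0 = A0"
| "agg_set \<omega> A0 \<epsilon> \<delta> (Suc i) =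
     (let B = agg_set \<omega> A0 \<epsilon> \<delta> i
      in top_k (\<lambda>a. emp_mean \<omega> a (agg_off \<epsilon> \<delta> i) ((i + 1) * agg_m \<epsilon> \<delta>)) B
               (nat \<lfloor>real (card B) * (\<delta> + phi (card A0))\<rfloor>))"

definition agg_elim :: "('a \<times> nat \<Rightarrow> real) \<Rightarrow> 'a::linorder set \<Rightarrow> real \<Rightarrow> real \<Rightarrow> 'a set" where
  "agg_elim \<omega> A0 \<epsilon> \<delta> = agg_set \<omega> A0 \<epsilon> \<delta> (Suc (t_rounds \<delta> (card A0)))"

definition agg_samples :: "('a \<times> nat \<Rightarrow> real) \<Rightarrow> 'a::linorder set \<Rightarrow> real \<Rightarrow> real \<Rightarrow> nat" where
  "agg_samples \<omega> A0 \<epsilon> \<delta> =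
     (\<Sum>i\<le>t_rounds \<delta> (card A0). card (agg_set \<omega> A0 \<epsilon> \<delta> i) * ((i + 1) * agg_m \<epsilon> \<delta>))"

definition saba :: "('a \<times> nat \<Rightarrow> real) \<Rightarrow> 'a::linorder set \<Rightarrow> real \<Rightarrow> real \<Rightarrow> 'a" where
  "saba \<omega> A \<epsilon> \<delta> =
     naive_elim \<omega> (agg_elim \<omega> A \<epsilon> (\<delta> / 2)) \<epsilon> (\<delta> / exp 1)
       (agg_off \<epsilon> (\<delta> / 2) (Suc (t_rounds (\<delta> / 2) (card A))))"

definition saba_samples :: "('a \<times> nat \<Rightarrow> real) \<Rightarrow> 'a::linorder set \<Rightarrow> real \<Rightarrow> real \<Rightarrow> nat" where
  "saba_samples \<omega> A \<epsilon> \<delta> =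
     agg_samples \<omega> A \<epsilon> (\<delta> / 2) + naive_samples (agg_elim \<omega> A \<epsilon> (\<delta> / 2)) \<epsilon> (\<delta> / exp 1)"

end

theory Submission
  imports Defs
begin


context
  fixes M :: "'i \<Rightarrow> real measure" and I :: "'i set"
  assumes P: "\<And>i. prob_space (M i)"
begin

lemma pps: "product_prob_space M"
proof -
  have "\<And>i. sigma_finite_measure (M i)" using P prob_space_imp_sigma_finite by blast
  then show ?thesis
    by (auto simp: product_prob_space_def product_prob_space_axioms_def product_sigma_finite_def P)
qed

lemma indep_components:
  assumes I: "I \<noteq> {}"
  shows "prob_space.indep_vars (PiM I M) M (\<lambda>i \<omega>. \<omega> i) I"
proof -
  interpret product_prob_space M I by (rule pps)
  have rv: "\<And>i. i \<in> I \<Longrightarrow> random_variable (M i) (\<lambda>\<omega>. \<omega> i)"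
    by (simp add: measurable_component_singleton)
  have "distr (PiM I M) (PiM I M) (\<lambda>x. \<lambda>i\<in>I. x i) = distr (PiM I M) (PiM I M) (\<lambda>x. x)"
    by (rule distr_cong) (auto simp: space_PiM PiE_def extensional_def restrict_def fun_eq_iff)
  also have "\<dots> = PiM I M" by simp
  also have "\<dots> = (\<Pi>\<^sub>M i\<in>I. distr (PiM I M) (M i) (\<lambda>\<omega>. \<omega> i))"
    by (rule PiM_cong) (auto simp: PiM_component)
  finally show ?thesis
    by (subst indep_vars_iff_distr_eq_PiM'[OF I rv]) auto
qed

lemma indep_restrict_events:
  assumes E: "E \<in> sets (PiM I M)" and F: "F \<in> sets (PiM I M)"
    and J: "J1 \<subseteq> I" "J2 \<subseteq> I" "J1 \<inter> J2 = {}"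
    and dE: "\<And>\<omega> \<omega>'. \<omega> \<in> space (PiM I M) \<Longrightarrow> \<omega>' \<in> space (PiM I M) \<Longrightarrow> (\<And>i. i \<in> J1 \<Longrightarrow> \<omega> i = \<omega>' i) \<Longrightarrow> \<omega> \<in> E \<Longrightarrow> \<omega>' \<in> E"
    and dF: "\<And>\<omega> \<omega>'. \<omega> \<in> space (PiM I M) \<Longrightarrow> \<omega>' \<in> space (PiM I M) \<Longrightarrow> (\<And>i. i \<in> J2 \<Longrightarrow> \<omega> i = \<omega>' i) \<Longrightarrow> \<omega> \<in> F \<Longrightarrow> \<omega>' \<in> F"
    and False: "I \<noteq> {}"
  shows "measure (PiM I M) (E \<inter> F) = measure (PiM I M) E * measure (PiM I M) F"
proof -
  interpret product_prob_space M I by (rule pps)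
  obtain \<omega>0 where w0: "\<omega>0 \<in> space (PiM I M)" using P.not_empty by blast
  define ext where "ext = (\<lambda>J x. merge J (I - J) (x, restrict \<omega>0 (I - J)))"
  have ext_m: "J \<subseteq> I \<Longrightarrow> ext J \<in> measurable (PiM J M) (PiM I M)" for J
  proof -
    assume JI: "J \<subseteq> I"
    have r0: "restrict \<omega>0 (I - J) \<in> space (PiM (I - J) M)" using w0 by (auto simp: space_PiM)
    have "(\<lambda>x. merge J (I - J) (x, restrict \<omega>0 (I - J))) \<in> measurable (PiM J M) (PiM (J \<union> (I - J)) M)"
      using r0 by measurable
    moreover have "J \<union> (I - J) = I" using JI by auto
    ultimately show ?thesis by (simp add: ext_def)
  qed
  have ext_sp: "J \<subseteq> I \<Longrightarrow> \<omega> \<in> space (PiM I M) \<Longrightarrow> ext J (restrict \<omega> J) \<in> space (PiM I M)" for J \<omega>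
  proof -
    assume a: "J \<subseteq> I" "\<omega> \<in> space (PiM I M)"
    then have "restrict \<omega> J \<in> space (PiM J M)" by (auto simp: space_PiM)
    then show ?thesis using measurable_space[OF ext_m[OF a(1)]] by blast
  qed
  have ext_eq: "i \<in> J \<Longrightarrow> ext J (restrict \<omega> J) i = \<omega> i" for J \<omega> i
    by (simp add: ext_def merge_def)
  have Erep: "E = (\<lambda>\<omega>. restrict (\<lambda>i. \<omega> i) J1) -` (ext J1 -` E \<inter> space (PiM J1 M)) \<inter> space (PiM I M)"
  proof -
    have "E \<subseteq> space (PiM I M)" using E sets.sets_into_space by blast
    moreover have "\<omega> \<in> E \<longleftrightarrow> ext J1 (restrict \<omega> J1) \<in> E" if "\<omega> \<in> space (PiM I M)" for \<omega>
      using dE[OF that ext_sp[OF J(1) that]] dE[OF ext_sp[OF J(1) that] that] ext_eq by metis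
    moreover have "restrict \<omega> J1 \<in> space (PiM J1 M)" if "\<omega> \<in> space (PiM I M)" for \<omega>
      using that J(1) by (auto simp: space_PiM)
    ultimately show ?thesis by auto
  qed
  have Frep: "F = (\<lambda>\<omega>. restrict (\<lambda>i. \<omega> i) J2) -` (ext J2 -` F \<inter> space (PiM J2 M)) \<inter> space (PiM I M)"
  proof -
    have "F \<subseteq> space (PiM I M)" using F sets.sets_into_space by blast
    moreover have "\<omega> \<in> F \<longleftrightarrow> ext J2 (restrict \<omega> J2) \<in> F" if "\<omega> \<in> space (PiM I M)" for \<omega>
      using dF[OF that ext_sp[OF J(2) that]] dF[OF ext_sp[OF J(2) that] that] ext_eq by metis
    moreover have "restrict \<omega> J2 \<in> space (PiM J2 M)" if "\<omega> \<in> space (PiM I M)" for \<omega>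
      using that J(2) by (auto simp: space_PiM)
    ultimately show ?thesis by auto
  qed
  have ind: "indep_var (PiM J1 M) (\<lambda>\<omega>. restrict (\<lambda>i. \<omega> i) J1) (PiM J2 M) (\<lambda>\<omega>. restrict (\<lambda>i. \<omega> i) J2)"
    by (rule indep_var_restrict[OF indep_components[OF False]]) (use J in auto)
  have s1: "ext J1 -` E \<inter> space (PiM J1 M) \<in> sets (PiM J1 M)"
    using measurable_sets[OF ext_m[OF J(1)] E] .
  have s2: "ext J2 -` F \<inter> space (PiM J2 M) \<in> sets (PiM J2 M)"
    using measurable_sets[OF ext_m[OF J(2)] F] .
  have "E \<inter> F = (\<lambda>\<omega>. (restrict (\<lambda>i. \<omega> i) J1, restrict (\<lambda>i. \<omega> i) J2)) -`
      ((ext J1 -` E \<inter> space (PiM J1 M)) \<times> (ext J2 -` F \<inter> space (PiM J2 M))) \<inter> space (PiM I M)"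
    by (subst Erep, subst Frep) auto
  then show ?thesis
    using indep_varD[OF ind s1 s2] Erep Frep by simp
qed

lemma hoeffding_block:
  assumes K: "finite K" "K \<noteq> {}" "K \<subseteq> I"
    and B: "\<And>i. i \<in> K \<Longrightarrow> sets (M i) = sets borel"
    and AE01: "\<And>i. i \<in> K \<Longrightarrow> AE x in M i. x \<in> {0..1}"
    and s: "s \<ge> 0"
  shows "measure (PiM I M) {\<omega> \<in> space (PiM I M). (\<Sum>i\<in>K. \<omega> i) \<ge> (\<Sum>i\<in>K. integral\<^sup>L (M i) (\<lambda>x. x)) + s}
           \<le> exp (- 2 * s\<^sup>2 / real (card K))"
    and "measure (PiM I M) {\<omega> \<in> space (PiM I M). (\<Sum>i\<in>K. \<omega> i) \<le> (\<Sum>i\<in>K. integral\<^sup>L (M i) (\<lambda>x. x)) - s}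
           \<le> exp (- 2 * s\<^sup>2 / real (card K))"
proof -
  interpret product_prob_space M I by (rule pps)
  have IK: "I \<noteq> {}" using K by auto
  have ind0: "indep_vars M (\<lambda>i \<omega>. \<omega> i) K"
    using indep_vars_subset[OF indep_components[OF IK] K(3)] .
  have ind: "indep_vars (\<lambda>_. borel) (\<lambda>i \<omega>. (\<lambda>x. x) (\<omega> i)) K"
    by (rule indep_vars_compose2[OF ind0]) (simp add: measurable_cong_sets[OF B refl] cong: measurable_cong_sets)
  have ae: "\<And>i. i \<in> K \<Longrightarrow> AE \<omega> in PiM I M. \<omega> i \<in> {0..1}"
    using AE_component AE01 K(3) by blast
  interpret H: Hoeffding_ineq "PiM I M" K "\<lambda>i \<omega>. \<omega> i" "\<lambda>_. 0" "\<lambda>_. 1"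
     "\<Sum>i\<in>K. expectation (\<lambda>\<omega>. \<omega> i)"
    by unfold_locales (use K ind ae in auto)
  have ex: "expectation (\<lambda>\<omega>. \<omega> i) = integral\<^sup>L (M i) (\<lambda>x. x)" if "i \<in> K" for i
  proof -
    have "integral\<^sup>L (M i) (\<lambda>x. x) = integral\<^sup>L (distr (PiM I M) (M i) (\<lambda>\<omega>. \<omega> i)) (\<lambda>x. x)"
      using PiM_component that K(3) by auto
    also have "\<dots> = expectation (\<lambda>\<omega>. \<omega> i)"
      by (subst integral_distr) (auto simp: measurable_component_singleton measurable_cong_sets[OF B refl] that K(3)[THEN subsetD] cong: measurable_cong_sets)
    finally show ?thesis by simp
  qed
  have cK: "(\<Sum>i\<in>K. (1 - (0::real))\<^sup>2) = real (card K)" by simp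
  have pos: "(\<Sum>i\<in>K. (1 - (0::real))\<^sup>2) > 0" using K by (simp add: card_gt_0_iff)
  show "measure (PiM I M) {\<omega> \<in> space (PiM I M). (\<Sum>i\<in>K. \<omega> i) \<ge> (\<Sum>i\<in>K. integral\<^sup>L (M i) (\<lambda>x. x)) + s}
           \<le> exp (- 2 * s\<^sup>2 / real (card K))"
    using H.Hoeffding_ineq_ge[OF s pos] ex by (simp add: cK)
  show "measure (PiM I M) {\<omega> \<in> space (PiM I M). (\<Sum>i\<in>K. \<omega> i) \<le> (\<Sum>i\<in>K. integral\<^sup>L (M i) (\<lambda>x. x)) - s}
           \<le> exp (- 2 * s\<^sup>2 / real (card K))"
    using H.Hoeffding_ineq_le[OF s pos] ex by (simp add: cK)
qed

end


lemma (in prob_space) count_cheb: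
  fixes E :: "'b \<Rightarrow> 'a set" and p k :: real
  assumes fin: "finite T" and ev: "\<And>b. b \<in> T \<Longrightarrow> E b \<in> events"
    and pind: "\<And>b c. b \<in> T \<Longrightarrow> c \<in> T \<Longrightarrow> b \<noteq> c \<Longrightarrow> prob (E b \<inter> E c) = prob (E b) * prob (E c)"
    and p: "\<And>b. b \<in> T \<Longrightarrow> prob (E b) \<le> p"
    and U: "real (card T) * p \<le> U" and k: "U < k"
  shows "prob {\<omega> \<in> space M. k \<le> real (card {b\<in>T. \<omega> \<in> E b})} \<le> U / (k - U)\<^sup>2"
proof -
  define f where "f = (\<lambda>\<omega>. \<Sum>b\<in>T. indicator (E b) \<omega> :: real)"
  define \<mu> where "\<mu> = (\<Sum>b\<in>T. prob (E b))"
  have fc: "real (card {b\<in>T. \<omega> \<in> E b}) = f \<omega>" for \<omega>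
  proof -
    have "f \<omega> = (\<Sum>b\<in>T. if \<omega> \<in> E b then 1 else 0)" by (simp add: f_def indicator_def of_bool_def)
    also have "\<dots> = real (card {b\<in>T. \<omega> \<in> E b})"
      using fin by (simp add: sum.If_cases Int_def)
    finally show ?thesis by simp
  qed
  have rvI: "\<And>b. b \<in> T \<Longrightarrow> integrable M (indicator (E b) :: 'a \<Rightarrow> real)"
    using ev by (auto simp: emeasure_eq_measure)
  have intf: "integrable M f" unfolding f_def using rvI by auto
  have f2: "(f \<omega>)\<^sup>2 = (\<Sum>b\<in>T. \<Sum>c\<in>T. indicator (E b \<inter> E c) \<omega>)" for \<omega>
    by (simp add: f_def power2_eq_square sum_product indicator_inter_arith)
  have rvI2: "\<And>b c. b \<in> T \<Longrightarrow> c \<in> T \<Longrightarrow> integrable M (indicator (E b \<inter> E c) :: 'a \<Rightarrow> real)"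
    using ev by (auto simp: emeasure_eq_measure)
  have intf2: "integrable M (\<lambda>\<omega>. (f \<omega>)\<^sup>2)" unfolding f2 using rvI2 by auto
  have Ef: "expectation f = \<mu>"
    unfolding f_def \<mu>_def using rvI ev by (simp add: Bochner_Integration.integral_sum)
  have Ef2: "expectation (\<lambda>\<omega>. (f \<omega>)\<^sup>2) = (\<Sum>b\<in>T. \<Sum>c\<in>T. prob (E b \<inter> E c))"
    unfolding f2 using rvI2 ev by (simp add: Bochner_Integration.integral_sum sets.Int)
  have "(\<Sum>b\<in>T. \<Sum>c\<in>T. prob (E b \<inter> E c)) = (\<Sum>b\<in>T. \<Sum>c\<in>T. (if b = c then prob (E b) - prob (E b) * prob (E c) else 0) + prob (E b) * prob (E c))"
    by (intro sum.cong refl) (auto simp: pind)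
  also have "\<dots> = (\<Sum>b\<in>T. prob (E b) - prob (E b) * prob (E b)) + \<mu>\<^sup>2"
    using fin by (simp add: sum.distrib \<mu>_def power2_eq_square sum_product)
  finally have var: "variance f = (\<Sum>b\<in>T. prob (E b) - prob (E b) * prob (E b))"
    using variance_eq[OF intf intf2] Ef Ef2 by simp
  also have "\<dots> \<le> \<mu>" unfolding \<mu>_def by (intro sum_mono) auto
  finally have varle: "variance f \<le> \<mu>" .
  have mu0: "0 \<le> \<mu>" unfolding \<mu>_def by (simp add: sum_nonneg)
  have muT: "\<mu> \<le> U" unfolding \<mu>_def using sum_mono[of T "\<lambda>b. prob (E b)" "\<lambda>_. p", OF p] U by simp
  have kmu: "k - \<mu> > 0" using muT k by linarith
  have rvf: "random_variable borel f" using intf by auto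
  have "prob {\<omega> \<in> space M. k \<le> real (card {b\<in>T. \<omega> \<in> E b})} \<le> prob {\<omega> \<in> space M. \<bar>f \<omega> - \<mu>\<bar> \<ge> k - \<mu>}"
    using rvf by (intro finite_measure_mono) (auto simp: fc)
  also have "\<dots> \<le> variance f / (k - \<mu>)\<^sup>2"
    using Chebyshev_inequality[OF rvf intf2 kmu] Ef by simp
  also have "\<dots> \<le> \<mu> / (k - \<mu>)\<^sup>2"
    using varle kmu by (simp add: divide_right_mono)
  also have "\<dots> \<le> U / (k - U)\<^sup>2"
  proof -
    have a: "(k - U)\<^sup>2 \<le> (k - \<mu>)\<^sup>2" using muT k by (intro power_mono) auto
    have b: "\<mu> * (k - U)\<^sup>2 \<le> U * (k - \<mu>)\<^sup>2"
      using mult_mono[OF muT a] mu0 muT by simp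
    have c: "(k - U)\<^sup>2 > 0" using k by simp
    show ?thesis using b c kmu by (simp add: divide_simps)
  qed
  finally show ?thesis .
qed


lemma insort_key_cong_ord:
  fixes kf kg :: "'a \<Rightarrow> real"
  assumes "\<forall>y\<in>insert x (set ys). \<forall>z\<in>insert x (set ys). (kf y \<le> kf z) = (kg y \<le> kg z)"
  shows "insort_key kf x ys = insort_key kg x ys"
  using assms by (induction ys) auto

lemma sort_key_cong_ord:
  fixes kf kg :: "'a \<Rightarrow> real"
  assumes "\<forall>y\<in>set xs. \<forall>z\<in>set xs. (kf y \<le> kf z) = (kg y \<le> kg z)"
  shows "sort_key kf xs = sort_key kg xs"
  using assms
proof (induction xs)
  case Nil then show ?case by simp
next
  case (Cons x xs)
  then have IH: "sort_key kf xs = sort_key kg xs" by simp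
  show ?case
    using Cons.prems by (simp add: IH, intro insort_key_cong_ord) (simp add: set_insort_key)
qed

lemma rank_list_cong_ord:
  assumes "finite B" "\<forall>b\<in>B. \<forall>c\<in>B. (f b \<le> f c) = (g b \<le> g c)"
  shows "rank_list f B = rank_list g B"
  unfolding rank_list_def using assms by (intro sort_key_cong_ord) auto

lemma top_k_cong_ord:
  assumes "finite B" "\<forall>b\<in>B. \<forall>c\<in>B. (f b \<le> f c) = (g b \<le> g c)"
  shows "top_k f B k = top_k g B k"
  unfolding top_k_def using rank_list_cong_ord[OF assms] by simp

lemma rank_list_basic:
  assumes "finite B"
  shows "distinct (rank_list f B)" "set (rank_list f B) = B" "length (rank_list f B) = card B"
    "sorted (map (\<lambda>a. - f a) (rank_list f B))"
  using assms by (auto simp: rank_list_def)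

lemma top_k_sub: "finite B \<Longrightarrow> top_k f B k \<subseteq> B"
  unfolding top_k_def using rank_list_basic(2) by (metis set_take_subset)

lemma card_top_k: "finite B \<Longrightarrow> card (top_k f B k) = min k (card B)"
  unfolding top_k_def using rank_list_basic[of B f]
  by (simp add: distinct_card)

lemma top_k_keep:
  assumes fin: "finite B" and a: "a \<in> B" and cnt: "card {b \<in> B - {a}. f a \<le> f b} < k"
  shows "a \<in> top_k f B k"
proof -
  define xs where "xs = rank_list f B"
  have d: "distinct xs" and s: "set xs = B" and so: "sorted (map (\<lambda>a. - f a) xs)"
    using rank_list_basic[OF fin] by (auto simp: xs_def)
  obtain ys zs where xs: "xs = ys @ a # zs" using a s by (metis split_list)
  have ys_le: "\<forall>y\<in>set ys. f a \<le> f y" using so unfolding xs by (auto simp: sorted_append)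
  have "a \<notin> set ys" using d xs by auto
  then have "set ys \<subseteq> {b \<in> B - {a}. f a \<le> f b}" using ys_le s xs by auto
  then have "card (set ys) \<le> card {b \<in> B - {a}. f a \<le> f b}" using fin by (intro card_mono) auto
  moreover have "card (set ys) = length ys" using d xs by (simp add: distinct_card)
  ultimately have "length ys < k" using cnt by linarith
  then have "a \<in> set (take k xs)" unfolding xs by (simp add: take_append) (cases "k - length ys", auto)
  then show ?thesis by (simp add: top_k_def xs_def)
qed

lemma rank_hd:
  assumes fin: "finite B" and a: "a \<in> B" and lt: "\<And>b. b \<in> B \<Longrightarrow> b \<noteq> a \<Longrightarrow> f b < f a"
  shows "hd (rank_list f B) = a"
proof -
  define xs where "xs = rank_list f B"
  have s: "set xs = B" and so: "sorted (map (\<lambda>a. - f a) xs)"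
    using rank_list_basic[OF fin] by (auto simp: xs_def)
  obtain h rest where xs: "xs = h # rest" using a s by (cases xs) auto
  show ?thesis
  proof (rule ccontr)
    assume "hd (rank_list f B) \<noteq> a"
    then have ha: "h \<noteq> a" by (simp add: xs_def[symmetric] xs)
    then have "a \<in> set rest" using a s xs by auto
    then have "- f h \<le> - f a" using so xs by auto
    moreover have "f h < f a" using lt ha s xs by auto
    ultimately show False by simp
  qed
qed

lemma rank_in:
  assumes "finite B" "B \<noteq> {}"
  shows "hd (rank_list f B) \<in> B"
  using rank_list_basic[OF assms(1), of f] assms
  by (metis hd_in_set set_empty)


lemma meas_pattern:
  fixes X :: "'b \<Rightarrow> 'a \<Rightarrow> real" and G :: "('b \<Rightarrow> real) \<Rightarrow> 'c"
  assumes fin: "finite B" and X: "\<And>b. b \<in> B \<Longrightarrow> X b \<in> borel_measurable M"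
    and G: "\<And>f g. \<forall>b\<in>B. \<forall>c\<in>B. (f b \<le> f c) = (g b \<le> g c) \<Longrightarrow> G f = G g"
  shows "{\<omega> \<in> space M. G (\<lambda>b. X b \<omega>) \<in> T} \<in> sets M"
proof -
  define pat where "pat = (\<lambda>f::'b\<Rightarrow>real. {(b,c) \<in> B \<times> B. f b \<le> f c})"
  define RR where "RR = {R \<in> Pow (B \<times> B). \<exists>f. pat f = R \<and> G f \<in> T}"
  have eq: "{\<omega> \<in> space M. G (\<lambda>b. X b \<omega>) \<in> T} = (\<Union>R\<in>RR. {\<omega> \<in> space M. pat (\<lambda>b. X b \<omega>) = R})"
  proof (intro equalityI subsetI)
    fix \<omega> assume "\<omega> \<in> {\<omega> \<in> space M. G (\<lambda>b. X b \<omega>) \<in> T}"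
    then show "\<omega> \<in> (\<Union>R\<in>RR. {\<omega> \<in> space M. pat (\<lambda>b. X b \<omega>) = R})"
      unfolding RR_def pat_def by blast
  next
    fix \<omega> assume "\<omega> \<in> (\<Union>R\<in>RR. {\<omega> \<in> space M. pat (\<lambda>b. X b \<omega>) = R})"
    then obtain f where sp: "\<omega> \<in> space M" and pf: "pat (\<lambda>b. X b \<omega>) = pat f" and Gf: "G f \<in> T"
      unfolding RR_def by auto
    have "\<forall>b\<in>B. \<forall>c\<in>B. (X b \<omega> \<le> X c \<omega>) = (f b \<le> f c)"
    proof (intro ballI)
      fix b c assume "b \<in> B" "c \<in> B"
      then show "(X b \<omega> \<le> X c \<omega>) = (f b \<le> f c)"
        using pf unfolding pat_def set_eq_iff by blast
    qed
    then have "G (\<lambda>b. X b \<omega>) = G f" by (intro G) auto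
    then show "\<omega> \<in> {\<omega> \<in> space M. G (\<lambda>b. X b \<omega>) \<in> T}" using sp Gf by simp
  qed
  have one: "{\<omega> \<in> space M. pat (\<lambda>b. X b \<omega>) = R} \<in> sets M" if "R \<subseteq> B \<times> B" for R
  proof -
    have "{\<omega> \<in> space M. pat (\<lambda>b. X b \<omega>) = R} = {\<omega> \<in> space M. \<forall>b\<in>B. \<forall>c\<in>B. (X b \<omega> \<le> X c \<omega>) = ((b,c) \<in> R)}"
      using that unfolding pat_def by auto
    also have "\<dots> \<in> sets M"
      using fin X by measurable
    finally show ?thesis .
  qed
  have "finite RR" unfolding RR_def using fin by auto
  then have "(\<Union>R\<in>RR. {\<omega> \<in> space M. pat (\<lambda>b. X b \<omega>) = R}) \<in> sets M"
    using one by (intro sets.finite_UN) (auto simp: RR_def)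
  then show ?thesis using eq by simp
qed


fun cs :: "nat \<Rightarrow> real \<Rightarrow> nat \<Rightarrow> nat" where
  "cs n q 0 = n"
| "cs n q (Suc i) = nat \<lfloor>real (cs n q i) * q\<rfloor>"

lemma agg_off_Suc: "agg_off \<epsilon> \<delta> (Suc i) = agg_off \<epsilon> \<delta> i + (i + 1) * agg_m \<epsilon> \<delta>"
  by (simp add: agg_off_def)

lemma agg_off_mono: "i \<le> j \<Longrightarrow> agg_off \<epsilon> \<delta> i \<le> agg_off \<epsilon> \<delta> j"
  unfolding agg_off_def by (intro sum_mono2) auto

lemma agg_set_sub: "finite A \<Longrightarrow> agg_set \<omega> A \<epsilon> \<delta> i \<subseteq> A"
proof (induction i)
  case 0 then show ?case by simp
next
  case (Suc i)
  then have "finite (agg_set \<omega> A \<epsilon> \<delta> i)" by (meson finite_subset)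
  then show ?case using Suc top_k_sub[OF \<open>finite (agg_set \<omega> A \<epsilon> \<delta> i)\<close>] by (simp add: Let_def) (meson order_trans)
qed

lemma agg_set_card:
  assumes "finite A" "0 \<le> \<delta> + phi (card A)" "\<delta> + phi (card A) \<le> 1"
  shows "card (agg_set \<omega> A \<epsilon> \<delta> i) = cs (card A) (\<delta> + phi (card A)) i"
proof (induction i)
  case 0 then show ?case by simp
next
  case (Suc i)
  define B where "B = agg_set \<omega> A \<epsilon> \<delta> i"
  define q where "q = \<delta> + phi (card A)"
  have fB: "finite B" using agg_set_sub[OF assms(1)] B_def by (meson finite_subset assms(1))
  have "nat \<lfloor>real (card B) * q\<rfloor> \<le> card B"
  proof -
    have "real (card B) * q \<le> real (card B)" using assms by (simp add: q_def mult_left_le)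
    then have "\<lfloor>real (card B) * q\<rfloor> \<le> int (card B)" by linarith
    then show ?thesis by linarith
  qed
  then show ?case using Suc card_top_k[OF fB]
    by (simp add: Let_def B_def[symmetric] q_def[symmetric] min_def)
qed

lemma emp_mean_cong:
  "(\<And>j. off \<le> j \<Longrightarrow> j < off + k \<Longrightarrow> \<omega> (a, j) = \<omega>' (a, j)) \<Longrightarrow> emp_mean \<omega> a off k = emp_mean \<omega>' a off k"
  unfolding emp_mean_def by (intro arg_cong2[where f="(/)"] sum.cong) auto

lemma agg_dep:
  assumes fin: "finite A"
  shows "(\<And>a j. a \<in> A \<Longrightarrow> j < agg_off \<epsilon> \<delta> i \<Longrightarrow> \<omega> (a, j) = \<omega>' (a, j)) \<Longrightarrow>
     agg_set \<omega> A \<epsilon> \<delta> i = agg_set \<omega>' A \<epsilon> \<delta> i"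
proof (induction i)
  case 0 then show ?case by simp
next
  case (Suc i)
  have IH: "agg_set \<omega> A \<epsilon> \<delta> i = agg_set \<omega>' A \<epsilon> \<delta> i"
    using Suc agg_off_mono[of i "Suc i" \<epsilon> \<delta>] by (intro Suc.IH) auto
  define B where "B = agg_set \<omega> A \<epsilon> \<delta> i"
  have BA: "B \<subseteq> A" using agg_set_sub[OF fin] B_def by auto
  have fB: "finite B" using BA fin finite_subset by blast
  have e: "\<forall>b\<in>B. emp_mean \<omega> b (agg_off \<epsilon> \<delta> i) ((i + 1) * agg_m \<epsilon> \<delta>) = emp_mean \<omega>' b (agg_off \<epsilon> \<delta> i) ((i + 1) * agg_m \<epsilon> \<delta>)"
    using BA Suc.prems by (auto intro!: emp_mean_cong simp: agg_off_Suc)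
  have "top_k (\<lambda>a. emp_mean \<omega> a (agg_off \<epsilon> \<delta> i) ((i + 1) * agg_m \<epsilon> \<delta>)) B k =
        top_k (\<lambda>a. emp_mean \<omega>' a (agg_off \<epsilon> \<delta> i) ((i + 1) * agg_m \<epsilon> \<delta>)) B k" for k
    using e by (intro top_k_cong_ord fB) auto
  then show ?case using IH by (simp add: Let_def B_def)
qed

context
  fixes Mx :: "('a::linorder \<times> nat \<Rightarrow> real) measure" and A :: "'a set"
  assumes finA: "finite A"
    and comp: "\<And>a j. a \<in> A \<Longrightarrow> (\<lambda>\<omega>. \<omega> (a, j)) \<in> borel_measurable Mx"
begin

lemma emp_mean_meas: "a \<in> A \<Longrightarrow> (\<lambda>\<omega>. emp_mean \<omega> a off k) \<in> borel_measurable Mx"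
  unfolding emp_mean_def using comp by measurable

lemma agg_meas: "{\<omega> \<in> space Mx. agg_set \<omega> A \<epsilon> \<delta> i = S} \<in> sets Mx"
proof (induction i arbitrary: S)
  case 0
  then show ?case by (cases "A = S") auto
next
  case (Suc i)
  define ofs where "ofs = agg_off \<epsilon> \<delta> i"
  define l where "l = (i + 1) * agg_m \<epsilon> \<delta>"
  define kk where "kk = (\<lambda>B::'a set. nat \<lfloor>real (card B) * (\<delta> + phi (card A))\<rfloor>)"
  have eq: "{\<omega> \<in> space Mx. agg_set \<omega> A \<epsilon> \<delta> (Suc i) = S} =
    (\<Union>B\<in>Pow A. {\<omega> \<in> space Mx. agg_set \<omega> A \<epsilon> \<delta> i = B} \<inter>
        {\<omega> \<in> space Mx. top_k (\<lambda>b. emp_mean \<omega> b ofs l) B (kk B) \<in> {S}})"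
    using agg_set_sub[OF finA] by (auto simp: Let_def ofs_def l_def kk_def)
  have "{\<omega> \<in> space Mx. top_k (\<lambda>b. emp_mean \<omega> b ofs l) B (kk B) \<in> {S}} \<in> sets Mx" if "B \<subseteq> A" for B
  proof (rule meas_pattern[where X = "\<lambda>b \<omega>. emp_mean \<omega> b ofs l" and G = "\<lambda>f. top_k f B (kk B)"])
    show "finite B" using that finA finite_subset by blast
    show "\<And>b. b \<in> B \<Longrightarrow> (\<lambda>\<omega>. emp_mean \<omega> b ofs l) \<in> borel_measurable Mx"
      using that emp_mean_meas by blast
    show "\<And>f g. \<forall>b\<in>B. \<forall>c\<in>B. (f b \<le> f c) = (g b \<le> g c) \<Longrightarrow> top_k f B (kk B) = top_k g B (kk B)"
      using \<open>finite B\<close> by (intro top_k_cong_ord) auto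
  qed
  then show ?case unfolding eq using Suc finA by (intro sets.finite_UN) auto
qed

lemma rank_hd_meas:
  assumes "B \<subseteq> A"
  shows "{\<omega> \<in> space Mx. hd (rank_list (\<lambda>b. emp_mean \<omega> b ofs l) B) \<in> T} \<in> sets Mx"
proof (rule meas_pattern[where X = "\<lambda>b \<omega>. emp_mean \<omega> b ofs l" and G = "\<lambda>f. hd (rank_list f B)"])
  show "finite B" using assms finA finite_subset by blast
  show "\<And>b. b \<in> B \<Longrightarrow> (\<lambda>\<omega>. emp_mean \<omega> b ofs l) \<in> borel_measurable Mx"
    using assms emp_mean_meas by blast
  show "\<And>f g. \<forall>b\<in>B. \<forall>c\<in>B. (f b \<le> f c) = (g b \<le> g c) \<Longrightarrow> hd (rank_list f B) = hd (rank_list g B)"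
    using \<open>finite B\<close> by (metis rank_list_cong_ord)
qed

end


definition Mp :: "'a set \<Rightarrow> ('a \<Rightarrow> real measure) \<Rightarrow> 'a \<times> nat \<Rightarrow> real measure" where
  "Mp A D = (\<lambda>i. if fst i \<in> A then D (fst i) else return borel 0)"

context
  fixes A :: "'a::linorder set" and D :: "'a \<Rightarrow> real measure"
  assumes finA: "finite A"
    and distr: "\<And>a. a \<in> A \<Longrightarrow> prob_space (D a)"
    and borel: "\<And>a. a \<in> A \<Longrightarrow> sets (D a) = sets borel"
    and supp: "\<And>a. a \<in> A \<Longrightarrow> (AE x in D a. x \<in> {0..1})"
    and Ane: "A \<noteq> {}"
begin

lemma Mp_simp: "a \<in> A \<Longrightarrow> Mp A D (a, j) = D a"
  by (simp add: Mp_def)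

lemma Mp_prob: "prob_space (Mp A D i)"
  by (auto simp: Mp_def distr prob_space_return)

lemma Omega_eq: "sample_space A D = PiM (A \<times> UNIV) (Mp A D)"
  unfolding sample_space_def by (rule PiM_cong) (auto simp: Mp_def)

lemma Omega_prob: "prob_space (sample_space A D)"
proof -
  interpret product_prob_space "Mp A D" "A \<times> UNIV" using pps[OF Mp_prob] .
  show ?thesis unfolding Omega_eq by (rule P.prob_space_axioms)
qed

lemma comp_meas: "a \<in> A \<Longrightarrow> (\<lambda>\<omega>. \<omega> (a, j)) \<in> borel_measurable (sample_space A D)"
  unfolding Omega_eq
  using measurable_component_singleton[of "(a,j)" "A \<times> UNIV" "Mp A D"]
  by (simp add: Mp_def borel cong: measurable_cong_sets)

lemma hoeff_arm:
  assumes a: "a \<in> A" and k: "k > 0" and s: "s \<ge> 0"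
  shows "measure (sample_space A D) {\<omega> \<in> space (sample_space A D). arm_mean D a + s \<le> emp_mean \<omega> a off k} \<le> exp (- 2 * real k * s\<^sup>2)"
    and "measure (sample_space A D) {\<omega> \<in> space (sample_space A D). emp_mean \<omega> a off k \<le> arm_mean D a - s} \<le> exp (- 2 * real k * s\<^sup>2)"
proof -
  define K where "K = (\<lambda>j. (a, j)) ` {off..<off + k}"
  have inj: "inj_on (\<lambda>j. (a, j)) {off..<off + k}" by (auto simp: inj_on_def)
  have cK: "card K = k" unfolding K_def using card_image[OF inj] by simp
  have KI: "K \<subseteq> A \<times> UNIV" using a by (auto simp: K_def)
  have fK: "finite K" "K \<noteq> {}" using k by (auto simp: K_def)
  have sumK: "(\<Sum>i\<in>K. \<omega> i) = (\<Sum>j\<in>{off..<off + k}. \<omega> (a, j))" for \<omega> :: "'a \<times> nat \<Rightarrow> real"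
    unfolding K_def by (subst sum.reindex[OF inj]) simp
  have intK: "(\<Sum>i\<in>K. integral\<^sup>L (Mp A D i) (\<lambda>x. x)) = real k * arm_mean D a"
    unfolding K_def by (subst sum.reindex[OF inj]) (simp add: Mp_def a arm_mean_def)
  have B: "\<And>i. i \<in> K \<Longrightarrow> sets (Mp A D i) = sets borel" using a by (auto simp: K_def Mp_def borel)
  have AE: "AE x in Mp A D i. x \<in> {0..1}" if "i \<in> K" for i
  proof -
    from that obtain j where ij: "i = (a, j)" unfolding K_def by blast
    show ?thesis unfolding ij Mp_simp[OF a] by (rule supp[OF a])
  qed
  have ks: "real k * s \<ge> 0" using s by simp
  note H = hoeffding_block[OF Mp_prob fK KI B AE ks]
  have ex: "exp (- 2 * (real k * s)\<^sup>2 / real (card K)) = exp (- 2 * real k * s\<^sup>2)"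
    using k by (simp add: cK power2_eq_square)
  have e1: "emp_mean \<omega> a off k = (\<Sum>i\<in>K. \<omega> i) / real k" for \<omega>
    by (simp add: emp_mean_def sumK)
  have "{\<omega> \<in> space (sample_space A D). arm_mean D a + s \<le> emp_mean \<omega> a off k} =
        {\<omega> \<in> space (PiM (A \<times> UNIV) (Mp A D)). (\<Sum>i\<in>K. integral\<^sup>L (Mp A D i) (\<lambda>x. x)) + real k * s \<le> (\<Sum>i\<in>K. \<omega> i)}"
    using k unfolding Omega_eq intK e1 by (auto simp: field_simps)
  then show "measure (sample_space A D) {\<omega> \<in> space (sample_space A D). arm_mean D a + s \<le> emp_mean \<omega> a off k} \<le> exp (- 2 * real k * s\<^sup>2)"
    using H(1) ex Omega_eq by simp
  have "{\<omega> \<in> space (sample_space A D). emp_mean \<omega> a off k \<le> arm_mean D a - s} =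
        {\<omega> \<in> space (PiM (A \<times> UNIV) (Mp A D)). (\<Sum>i\<in>K. \<omega> i) \<le> (\<Sum>i\<in>K. integral\<^sup>L (Mp A D i) (\<lambda>x. x)) - real k * s}"
    using k unfolding Omega_eq intK e1 by (auto simp: field_simps)
  then show "measure (sample_space A D) {\<omega> \<in> space (sample_space A D). emp_mean \<omega> a off k \<le> arm_mean D a - s} \<le> exp (- 2 * real k * s\<^sup>2)"
    using H(2) ex Omega_eq by simp
qed

end


lemma measure_mono_any:
  "B \<in> sets M \<Longrightarrow> A \<subseteq> B \<Longrightarrow> finite_measure M \<Longrightarrow> measure M A \<le> measure M B"
  by (metis finite_measure.finite_measure_mono measure_nonneg measure_notin_sets)

lemma count_meas:
  assumes "finite T" "\<And>b. b \<in> T \<Longrightarrow> E b \<in> sets M"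
  shows "{\<omega> \<in> space M. k \<le> real (card {b\<in>T. \<omega> \<in> E b})} \<in> sets M"
proof -
  have fc: "real (card {b\<in>T. \<omega> \<in> E b}) = (\<Sum>b\<in>T. indicator (E b) \<omega>)" for \<omega>
  proof -
    have "(\<Sum>b\<in>T. indicator (E b) \<omega> :: real) = (\<Sum>b\<in>T. if \<omega> \<in> E b then 1 else 0)"
      by (simp add: indicator_def of_bool_def)
    also have "\<dots> = real (card {b\<in>T. \<omega> \<in> E b})"
      using assms(1) by (simp add: sum.If_cases Int_def)
    finally show ?thesis by simp
  qed
  have "(\<lambda>\<omega>. \<Sum>b\<in>T. indicator (E b) \<omega> :: real) \<in> borel_measurable M"
    using assms by (intro borel_measurable_sum) auto
  then show ?thesis unfolding fc by measurable
qed

locale bandit =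
  fixes A :: "'a::linorder set" and D :: "'a \<Rightarrow> real measure" and astar :: 'a and \<epsilon> :: real
  assumes finA: "finite A"
    and distr: "\<And>a. a \<in> A \<Longrightarrow> prob_space (D a)"
    and borel: "\<And>a. a \<in> A \<Longrightarrow> sets (D a) = sets borel"
    and supp: "\<And>a. a \<in> A \<Longrightarrow> (AE x in D a. x \<in> {0..1})"
    and astarA: "astar \<in> A"
    and unique: "\<And>a. a \<in> A \<Longrightarrow> a \<noteq> astar \<Longrightarrow> arm_mean D astar - arm_mean D a > \<epsilon>"
    and eps: "\<epsilon> > 0"

begin

abbreviation "\<Omega> \<equiv> sample_space A D"

lemma Ane: "A \<noteq> {}" using astarA by auto

lemma PS: "prob_space \<Omega>" using Omega_prob[OF finA distr borel supp Ane] .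

lemma FM: "finite_measure \<Omega>" using PS prob_space_def by blast

lemma comp: "a \<in> A \<Longrightarrow> (\<lambda>\<omega>. \<omega> (a, j)) \<in> borel_measurable \<Omega>"
  using comp_meas[OF finA distr borel supp Ane] .

lemma MpP: "prob_space (Mp A D i)"
  by (auto simp: Mp_def distr prob_space_return)

lemma indep2:
  assumes E: "E \<in> sets \<Omega>" and F: "F \<in> sets \<Omega>"
    and J: "Ja \<subseteq> A \<times> UNIV" "Jb \<subseteq> A \<times> UNIV" "Ja \<inter> Jb = {}"
    and dE: "\<And>\<omega> \<omega>'. \<omega> \<in> space \<Omega> \<Longrightarrow> \<omega>' \<in> space \<Omega> \<Longrightarrow> (\<And>i. i \<in> Ja \<Longrightarrow> \<omega> i = \<omega>' i) \<Longrightarrow> \<omega> \<in> E \<Longrightarrow> \<omega>' \<in> E"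
    and dF: "\<And>\<omega> \<omega>'. \<omega> \<in> space \<Omega> \<Longrightarrow> \<omega>' \<in> space \<Omega> \<Longrightarrow> (\<And>i. i \<in> Jb \<Longrightarrow> \<omega> i = \<omega>' i) \<Longrightarrow> \<omega> \<in> F \<Longrightarrow> \<omega>' \<in> F"
  shows "measure \<Omega> (E \<inter> F) = measure \<Omega> E * measure \<Omega> F"
proof -
  have eq: "\<Omega> = PiM (A \<times> UNIV) (Mp A D)" by (rule Omega_eq) (use finA distr borel supp Ane in auto)
  note E' = E[unfolded eq] and F' = F[unfolded eq] and dE' = dE[unfolded eq] and dF' = dF[unfolded eq]
  have ne: "A \<times> (UNIV::nat set) \<noteq> {}" using Ane by auto
  show ?thesis unfolding eq
    by (rule indep_restrict_events[where M = "Mp A D", OF MpP E' F' J dE' dF' ne])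
qed

lemma hoeff_up:
  assumes a: "a \<in> A" and k: "k > 0" and s: "s \<ge> 0"
  shows "measure \<Omega> {\<omega> \<in> space \<Omega>. arm_mean D a + s \<le> emp_mean \<omega> a off k} \<le> exp (- 2 * real k * s\<^sup>2)"
  using hoeff_arm(1)[OF finA distr borel supp Ane a k s] .

lemma hoeff_down:
  assumes a: "a \<in> A" and k: "k > 0" and s: "s \<ge> 0"
  shows "measure \<Omega> {\<omega> \<in> space \<Omega>. emp_mean \<omega> a off k \<le> arm_mean D a - s} \<le> exp (- 2 * real k * s\<^sup>2)"
  using hoeff_arm(2)[OF finA distr borel supp Ane a k s] .

lemma emp_meas: "a \<in> A \<Longrightarrow> (\<lambda>\<omega>. emp_mean \<omega> a off k) \<in> borel_measurable \<Omega>"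
  using emp_mean_meas[OF finA comp] .

lemma aggS_meas: "{\<omega> \<in> space \<Omega>. agg_set \<omega> A \<epsilon> d i = S} \<in> sets \<Omega>"
  using agg_meas[OF finA comp] .

lemma sum_agg_le1: "(\<Sum>S\<in>Pow A. measure \<Omega> {\<omega> \<in> space \<Omega>. agg_set \<omega> A \<epsilon> d i = S}) \<le> 1"
proof -
  have "(\<Sum>S\<in>Pow A. measure \<Omega> {\<omega> \<in> space \<Omega>. agg_set \<omega> A \<epsilon> d i = S}) =
        measure \<Omega> (\<Union>S\<in>Pow A. {\<omega> \<in> space \<Omega>. agg_set \<omega> A \<epsilon> d i = S})"
    using finA aggS_meas
    by (intro measure_finite_Union[symmetric]) (auto simp: disjoint_family_on_def finite_measure.emeasure_finite[OF FM])
  also have "\<dots> \<le> 1" using prob_space.prob_le_1[OF PS] by simp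
  finally show ?thesis .
qed

lemma dep_agg:
  assumes "\<omega> \<in> space \<Omega>" "\<omega>' \<in> space \<Omega>" "\<And>i. i \<in> A \<times> {..<agg_off \<epsilon> d r} \<Longrightarrow> \<omega> i = \<omega>' i"
  shows "agg_set \<omega> A \<epsilon> d r = agg_set \<omega>' A \<epsilon> d r"
  using assms by (intro agg_dep[OF finA]) auto

lemma gap_half: "b \<in> A \<Longrightarrow> b \<noteq> astar \<Longrightarrow> arm_mean D b + \<epsilon> / 2 < arm_mean D astar - \<epsilon> / 2"
  using unique by force

lemma round_bound:
  fixes d p :: real and i :: nat
  defines "q \<equiv> d + phi (card A)"
  defines "c \<equiv> cs (card A) q"
  assumes q01: "0 \<le> q" "q \<le> 1"
    and m: "agg_m \<epsilon> d > 0"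
    and p: "exp (- real ((i + 1) * agg_m \<epsilon> d) * \<epsilon>\<^sup>2 / 2) \<le> p"
    and U: "real (c i) * p < real (c (Suc i))"
  shows "\<exists>W \<in> sets \<Omega>. {\<omega> \<in> space \<Omega>. astar \<in> agg_set \<omega> A \<epsilon> d i \<and> astar \<notin> agg_set \<omega> A \<epsilon> d (Suc i)} \<subseteq> W
     \<and> measure \<Omega> W \<le> p + real (c i) * p / (real (c (Suc i)) - real (c i) * p)\<^sup>2"
proof -
  define ofs where "ofs = agg_off \<epsilon> d i"
  define l where "l = (i + 1) * agg_m \<epsilon> d"
  define X where "X = (\<lambda>(b::'a) (\<omega>::'a \<times> nat \<Rightarrow> real). emp_mean \<omega> b ofs l)"
  define thr where "thr = arm_mean D astar - \<epsilon> / 2"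
  define Ea where "Ea = {\<omega> \<in> space \<Omega>. X astar \<omega> \<le> arm_mean D astar - \<epsilon> / 2}"
  define E where "E = (\<lambda>b. {\<omega> \<in> space \<Omega>. arm_mean D b + \<epsilon> / 2 \<le> X b \<omega>})"
  define F where "F = (\<lambda>S. {\<omega> \<in> space \<Omega>. real (c (Suc i)) \<le> real (card {b\<in>S - {astar}. \<omega> \<in> E b})})"
  define G where "G = (\<lambda>S. {\<omega> \<in> space \<Omega>. agg_set \<omega> A \<epsilon> d i = S})"
  define W where "W = Ea \<union> (\<Union>S\<in>Pow A. G S \<inter> F S)"
  define \<beta> where "\<beta> = real (c i) * p / (real (c (Suc i)) - real (c i) * p)\<^sup>2"
  have l0: "l > 0" using m by (simp add: l_def)
  have p0: "p > 0" using p exp_gt_zero[of "- real ((i + 1) * agg_m \<epsilon> d) * \<epsilon>\<^sup>2 / 2"] by linarith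
  have ee0: "- 2 * x * (\<epsilon> / 2)\<^sup>2 = - x * \<epsilon>\<^sup>2 / 2" for x :: real
    by (simp add: power2_eq_square)
  have ee: "- 2 * real l * (\<epsilon> / 2)\<^sup>2 = - real ((i + 1) * agg_m \<epsilon> d) * \<epsilon>\<^sup>2 / 2"
    unfolding l_def by (rule ee0)
  have expeq: "exp (- 2 * real l * (\<epsilon> / 2)\<^sup>2) \<le> p"
    using p by (subst ee)
  have Xm: "b \<in> A \<Longrightarrow> X b \<in> borel_measurable \<Omega>" for b unfolding X_def using emp_meas by blast
  have Eam: "Ea \<in> sets \<Omega>" unfolding Ea_def using Xm[OF astarA] by measurable
  have Em: "b \<in> A \<Longrightarrow> E b \<in> sets \<Omega>" for b unfolding E_def using Xm by measurable
  have Fm: "S \<subseteq> A \<Longrightarrow> F S \<in> sets \<Omega>" for S unfolding F_def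
    using Em finA by (intro count_meas) (auto intro: finite_subset)
  have Gm: "G S \<in> sets \<Omega>" for S unfolding G_def by (rule aggS_meas)
  have Wm: "W \<in> sets \<Omega>" unfolding W_def using Eam Fm Gm finA by (intro sets.Un sets.finite_UN) auto
  have sub: "{\<omega> \<in> space \<Omega>. astar \<in> agg_set \<omega> A \<epsilon> d i \<and> astar \<notin> agg_set \<omega> A \<epsilon> d (Suc i)} \<subseteq> W"
  proof
    fix \<omega> assume w: "\<omega> \<in> {\<omega> \<in> space \<Omega>. astar \<in> agg_set \<omega> A \<epsilon> d i \<and> astar \<notin> agg_set \<omega> A \<epsilon> d (Suc i)}"
    define S where "S = agg_set \<omega> A \<epsilon> d i"
    have SA: "S \<subseteq> A" using agg_set_sub[OF finA] S_def by auto
    have fS: "finite S" using SA finA finite_subset by blast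
    have cS: "card S = c i" using agg_set_card[OF finA] q01 by (simp add: S_def c_def q_def)
    have sp: "\<omega> \<in> space \<Omega>" and aS: "astar \<in> S" and nS: "astar \<notin> agg_set \<omega> A \<epsilon> d (Suc i)" using w S_def by auto
    show "\<omega> \<in> W"
    proof (rule ccontr)
      assume "\<omega> \<notin> W"
      then have nEa: "X astar \<omega> > thr" and nF: "\<omega> \<notin> F S"
        using sp SA unfolding W_def Ea_def thr_def G_def S_def by auto
      have cnt: "card {b\<in>S - {astar}. \<omega> \<in> E b} < c (Suc i)" using nF sp unfolding F_def by auto
      have "{b \<in> S - {astar}. X astar \<omega> \<le> X b \<omega>} \<subseteq> {b\<in>S - {astar}. \<omega> \<in> E b}"
      proof
        fix b assume b: "b \<in> {b \<in> S - {astar}. X astar \<omega> \<le> X b \<omega>}"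
        then have "arm_mean D b + \<epsilon> / 2 < thr" using gap_half SA unfolding thr_def by auto
        then show "b \<in> {b\<in>S - {astar}. \<omega> \<in> E b}" using b nEa sp unfolding E_def by auto
      qed
      then have "card {b \<in> S - {astar}. X astar \<omega> \<le> X b \<omega>} \<le> card {b\<in>S - {astar}. \<omega> \<in> E b}"
        using fS by (intro card_mono) auto
      with cnt have "card {b \<in> S - {astar}. X astar \<omega> \<le> X b \<omega>} < nat \<lfloor>real (card S) * q\<rfloor>"
        by (simp add: cS c_def)
      then have "astar \<in> top_k (\<lambda>b. X b \<omega>) S (nat \<lfloor>real (card S) * q\<rfloor>)"
        by (intro top_k_keep fS aS)
      then have "astar \<in> agg_set \<omega> A \<epsilon> d (Suc i)"
        by (simp add: Let_def S_def[symmetric] X_def ofs_def l_def q_def)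
      then show False using nS by simp
    qed
  qed
  have PEa: "measure \<Omega> Ea \<le> p"
  proof -
    have "measure \<Omega> Ea \<le> exp (- 2 * real l * (\<epsilon> / 2)\<^sup>2)"
      unfolding Ea_def X_def using hoeff_down[OF astarA l0, of "\<epsilon> / 2" ofs] eps by simp
    then show ?thesis using expeq by linarith
  qed
  have PF: "measure \<Omega> (F S) \<le> \<beta>" if SA: "S \<subseteq> A" and cS: "card S = c i" for S
  proof -
    interpret prob_space \<Omega> by (rule PS)
    have fT: "finite (S - {astar})" using SA finA finite_subset by blast
    show ?thesis unfolding F_def \<beta>_def
    proof (rule count_cheb[OF fT])
      show "\<And>b. b \<in> S - {astar} \<Longrightarrow> E b \<in> events" using Em SA by auto
      show "prob (E b) \<le> p" if "b \<in> S - {astar}" for b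
      proof -
        have "prob (E b) \<le> exp (- 2 * real l * (\<epsilon> / 2)\<^sup>2)"
          unfolding E_def X_def using hoeff_up[of b l "\<epsilon> / 2" ofs] that SA l0 eps by auto
        then show ?thesis using expeq by linarith
      qed
      show "prob (E b \<inter> E b') = prob (E b) * prob (E b')"
        if "b \<in> S - {astar}" "b' \<in> S - {astar}" "b \<noteq> b'" for b b'
      proof (rule indep2[where Ja = "{b} \<times> {ofs..<ofs + l}" and Jb = "{b'} \<times> {ofs..<ofs + l}"])
        show "E b \<in> sets \<Omega>" "E b' \<in> sets \<Omega>" using Em that SA by auto
        show "{b} \<times> {ofs..<ofs + l} \<subseteq> A \<times> UNIV" "{b'} \<times> {ofs..<ofs + l} \<subseteq> A \<times> UNIV"
          "{b} \<times> {ofs..<ofs + l} \<inter> {b'} \<times> {ofs..<ofs + l} = {}" using that SA by auto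
        show "\<omega>' \<in> E b" if "\<omega> \<in> space \<Omega>" "\<omega>' \<in> space \<Omega>" "\<And>i. i \<in> {b} \<times> {ofs..<ofs + l} \<Longrightarrow> \<omega> i = \<omega>' i" "\<omega> \<in> E b" for \<omega> \<omega>'
          using that emp_mean_cong[of ofs l \<omega> b \<omega>'] unfolding E_def X_def by auto
        show "\<omega>' \<in> E b'" if "\<omega> \<in> space \<Omega>" "\<omega>' \<in> space \<Omega>" "\<And>i. i \<in> {b'} \<times> {ofs..<ofs + l} \<Longrightarrow> \<omega> i = \<omega>' i" "\<omega> \<in> E b'" for \<omega> \<omega>'
          using that emp_mean_cong[of ofs l \<omega> b' \<omega>'] unfolding E_def X_def by auto
      qed
      show "real (card (S - {astar})) * p \<le> real (c i) * p"
        using p0 cS card_Diff1_le[of S astar] fT by (intro mult_right_mono) auto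
      show "real (c i) * p < real (c (Suc i))" by (rule U)
    qed
  qed
  have b0: "\<beta> \<ge> 0" unfolding \<beta>_def using p0 by simp
  have PGF: "measure \<Omega> (G S \<inter> F S) \<le> measure \<Omega> (G S) * \<beta>" if SA: "S \<subseteq> A" for S
  proof (cases "card S = c i")
    case True
    have "measure \<Omega> (G S \<inter> F S) = measure \<Omega> (G S) * measure \<Omega> (F S)"
    proof (rule indep2[where Ja = "A \<times> {..<ofs}" and Jb = "A \<times> {ofs..<ofs + l}"])
      show "G S \<in> sets \<Omega>" "F S \<in> sets \<Omega>" using Gm Fm SA by auto
      show "A \<times> {..<ofs} \<subseteq> A \<times> UNIV" "A \<times> {ofs..<ofs + l} \<subseteq> A \<times> UNIV" "A \<times> {..<ofs} \<inter> A \<times> {ofs..<ofs + l} = {}" by auto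
      show "\<omega>' \<in> G S" if "\<omega> \<in> space \<Omega>" "\<omega>' \<in> space \<Omega>" "\<And>i. i \<in> A \<times> {..<ofs} \<Longrightarrow> \<omega> i = \<omega>' i" "\<omega> \<in> G S" for \<omega> \<omega>'
        using that dep_agg[of \<omega> \<omega>' d i] unfolding G_def ofs_def by auto
      show "\<omega>' \<in> F S" if w: "\<omega> \<in> space \<Omega>" "\<omega>' \<in> space \<Omega>" "\<And>i. i \<in> A \<times> {ofs..<ofs + l} \<Longrightarrow> \<omega> i = \<omega>' i" "\<omega> \<in> F S" for \<omega> \<omega>'
      proof -
        have "\<And>b. b \<in> S \<Longrightarrow> X b \<omega> = X b \<omega>'" unfolding X_def using w SA by (intro emp_mean_cong) auto
        then have "{b\<in>S - {astar}. \<omega> \<in> E b} = {b\<in>S - {astar}. \<omega>' \<in> E b}" using w unfolding E_def by auto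
        then show ?thesis using w unfolding F_def by auto
      qed
    qed
    also have "\<dots> \<le> measure \<Omega> (G S) * \<beta>" using PF[OF SA True] by (simp add: mult_left_mono)
    finally show ?thesis .
  next
    case False
    have "G S = {}" unfolding G_def using False agg_set_card[OF finA] q01 by (auto simp: c_def q_def)
    then show ?thesis by simp
  qed
  have "measure \<Omega> W \<le> measure \<Omega> Ea + measure \<Omega> (\<Union>S\<in>Pow A. G S \<inter> F S)"
    unfolding W_def using Eam Fm Gm finA by (intro measure_Un_le) (auto intro!: sets.finite_UN)
  also have "measure \<Omega> (\<Union>S\<in>Pow A. G S \<inter> F S) \<le> (\<Sum>S\<in>Pow A. measure \<Omega> (G S \<inter> F S))"
    using Fm Gm finA by (intro measure_UNION_le) auto
  also have "\<dots> \<le> (\<Sum>S\<in>Pow A. measure \<Omega> (G S) * \<beta>)" using PGF by (intro sum_mono) auto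
  also have "\<dots> = (\<Sum>S\<in>Pow A. measure \<Omega> (G S)) * \<beta>" by (simp add: sum_distrib_right)
  also have "\<dots> \<le> \<beta>" using mult_right_mono[OF sum_agg_le1[of d i] b0] unfolding G_def by simp
  finally have "measure \<Omega> W \<le> p + \<beta>" using PEa by linarith
  then show ?thesis using Wm sub unfolding \<beta>_def by blast
qed

end


context bandit
begin

lemma naive_bound:
  fixes d de p' :: real and tt :: nat
  defines "q \<equiv> d + phi (card A)"
  defines "c \<equiv> cs (card A) q"
  assumes q01: "0 \<le> q" "q \<le> 1"
    and Npos: "naive_N \<epsilon> de (c tt) > 0"
    and p': "exp (- real (naive_N \<epsilon> de (c tt)) * \<epsilon>\<^sup>2 / 2) \<le> p'"
    and c1: "c tt \<ge> 1"
  shows "\<exists>W \<in> sets \<Omega>. {\<omega> \<in> space \<Omega>. astar \<in> agg_set \<omega> A \<epsilon> d tt \<and>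
            naive_elim \<omega> (agg_set \<omega> A \<epsilon> d tt) \<epsilon> de (agg_off \<epsilon> d tt) \<noteq> astar} \<subseteq> W
     \<and> measure \<Omega> W \<le> p' + (real (c tt) - 1) * p'"
proof -
  define ofs where "ofs = agg_off \<epsilon> d tt"
  define Nn where "Nn = naive_N \<epsilon> de (c tt)"
  define Y where "Y = (\<lambda>(b::'a) (\<omega>::'a \<times> nat \<Rightarrow> real). emp_mean \<omega> b ofs Nn)"
  define thr where "thr = arm_mean D astar - \<epsilon> / 2"
  define Ea where "Ea = {\<omega> \<in> space \<Omega>. Y astar \<omega> \<le> arm_mean D astar - \<epsilon> / 2}"
  define E where "E = (\<lambda>b. {\<omega> \<in> space \<Omega>. arm_mean D b + \<epsilon> / 2 \<le> Y b \<omega>})"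
  define H where "H = (\<lambda>S. \<Union>b\<in>S - {astar}. E b)"
  define G where "G = (\<lambda>S. {\<omega> \<in> space \<Omega>. agg_set \<omega> A \<epsilon> d tt = S})"
  define SS where "SS = {S \<in> Pow A. astar \<in> S}"
  define W where "W = Ea \<union> (\<Union>S\<in>SS. G S \<inter> H S)"
  have N0: "Nn > 0" using Npos by (simp add: Nn_def)
  have p0: "p' > 0" using p' exp_gt_zero[of "- real (naive_N \<epsilon> de (c tt)) * \<epsilon>\<^sup>2 / 2"] by linarith
  have ee0: "- 2 * x * (\<epsilon> / 2)\<^sup>2 = - x * \<epsilon>\<^sup>2 / 2" for x :: real
    by (simp add: power2_eq_square)
  have expeq: "exp (- 2 * real Nn * (\<epsilon> / 2)\<^sup>2) \<le> p'"
    using p' unfolding Nn_def by (subst ee0)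
  have Ym: "b \<in> A \<Longrightarrow> Y b \<in> borel_measurable \<Omega>" for b unfolding Y_def using emp_meas by blast
  have Eam: "Ea \<in> sets \<Omega>" unfolding Ea_def using Ym[OF astarA] by measurable
  have Em: "b \<in> A \<Longrightarrow> E b \<in> sets \<Omega>" for b unfolding E_def using Ym by measurable
  have Hm: "S \<subseteq> A \<Longrightarrow> H S \<in> sets \<Omega>" for S unfolding H_def
    using Em finA by (intro sets.finite_UN) (auto intro: finite_subset)
  have Gm: "G S \<in> sets \<Omega>" for S unfolding G_def by (rule aggS_meas)
  have fSS: "finite SS" using finA by (simp add: SS_def)
  have Wm: "W \<in> sets \<Omega>" unfolding W_def using Eam Hm Gm fSS by (intro sets.Un sets.finite_UN) (auto simp: SS_def)
  have sub: "{\<omega> \<in> space \<Omega>. astar \<in> agg_set \<omega> A \<epsilon> d tt \<and>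
            naive_elim \<omega> (agg_set \<omega> A \<epsilon> d tt) \<epsilon> de (agg_off \<epsilon> d tt) \<noteq> astar} \<subseteq> W"
  proof
    fix \<omega> assume w: "\<omega> \<in> {\<omega> \<in> space \<Omega>. astar \<in> agg_set \<omega> A \<epsilon> d tt \<and>
            naive_elim \<omega> (agg_set \<omega> A \<epsilon> d tt) \<epsilon> de (agg_off \<epsilon> d tt) \<noteq> astar}"
    define S where "S = agg_set \<omega> A \<epsilon> d tt"
    have SA: "S \<subseteq> A" using agg_set_sub[OF finA] S_def by auto
    have fS: "finite S" using SA finA finite_subset by blast
    have cS: "card S = c tt" using agg_set_card[OF finA] q01 by (simp add: S_def c_def q_def)
    have sp: "\<omega> \<in> space \<Omega>" and aS: "astar \<in> S" using w S_def by auto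
    have ne: "hd (rank_list (\<lambda>b. Y b \<omega>) S) \<noteq> astar"
    proof -
      have "naive_elim \<omega> S \<epsilon> de ofs \<noteq> astar" using w by (simp add: S_def ofs_def)
      then show ?thesis by (simp add: naive_elim_def Y_def cS Nn_def)
    qed
    have SSS: "S \<in> SS" using SA aS by (simp add: SS_def)
    show "\<omega> \<in> W"
    proof (rule ccontr)
      assume "\<omega> \<notin> W"
      then have nEa: "Y astar \<omega> > thr" and nH: "\<omega> \<notin> H S"
        using sp SSS unfolding W_def Ea_def thr_def G_def S_def by auto
      have "\<And>b. b \<in> S \<Longrightarrow> b \<noteq> astar \<Longrightarrow> Y b \<omega> < Y astar \<omega>"
      proof -
        fix b assume b: "b \<in> S" "b \<noteq> astar"
        then have "\<omega> \<notin> E b" using nH unfolding H_def by auto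
        then have "Y b \<omega> < arm_mean D b + \<epsilon> / 2" using sp unfolding E_def by auto
        moreover have "arm_mean D b + \<epsilon> / 2 < thr" using gap_half b SA unfolding thr_def by auto
        ultimately show "Y b \<omega> < Y astar \<omega>" using nEa by linarith
      qed
      then have "hd (rank_list (\<lambda>b. Y b \<omega>) S) = astar" by (intro rank_hd fS aS) auto
      then show False using ne by simp
    qed
  qed
  have PEa: "measure \<Omega> Ea \<le> p'"
  proof -
    have "measure \<Omega> Ea \<le> exp (- 2 * real Nn * (\<epsilon> / 2)\<^sup>2)"
      unfolding Ea_def Y_def using hoeff_down[OF astarA N0, of "\<epsilon> / 2" ofs] eps by simp
    then show ?thesis using expeq by linarith
  qed
  have PE: "measure \<Omega> (E b) \<le> p'" if "b \<in> A" for b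
  proof -
    have "measure \<Omega> (E b) \<le> exp (- 2 * real Nn * (\<epsilon> / 2)\<^sup>2)"
      unfolding E_def Y_def using hoeff_up[OF that N0, of "\<epsilon> / 2" ofs] eps by simp
    then show ?thesis using expeq by linarith
  qed
  have PH: "measure \<Omega> (H S) \<le> (real (c tt) - 1) * p'" if SA: "S \<subseteq> A" and aS: "astar \<in> S" and cS: "card S = c tt" for S
  proof -
    have fT: "finite (S - {astar})" using SA finA finite_subset by blast
    have "measure \<Omega> (H S) \<le> (\<Sum>b\<in>S - {astar}. measure \<Omega> (E b))"
      unfolding H_def using fT Em SA by (intro measure_UNION_le) auto
    also have "\<dots> \<le> (\<Sum>b\<in>S - {astar}. p')" using PE SA by (intro sum_mono) auto
    also have "\<dots> = real (card (S - {astar})) * p'" by simp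
    also have "card (S - {astar}) = c tt - 1" using aS cS fT by (simp add: card_Diff_singleton_if)
    also have "real (c tt - 1) = real (c tt) - 1" using c1 by simp
    finally show ?thesis .
  qed
  have b0: "(real (c tt) - 1) * p' \<ge> 0" using c1 p0 by simp
  have PGH: "measure \<Omega> (G S \<inter> H S) \<le> measure \<Omega> (G S) * ((real (c tt) - 1) * p')" if SA: "S \<in> SS" for S
  proof (cases "card S = c tt")
    case True
    have SA': "S \<subseteq> A" and aS: "astar \<in> S" using SA by (auto simp: SS_def)
    have "measure \<Omega> (G S \<inter> H S) = measure \<Omega> (G S) * measure \<Omega> (H S)"
    proof (rule indep2[where Ja = "A \<times> {..<ofs}" and Jb = "A \<times> {ofs..<ofs + Nn}"])
      show "G S \<in> sets \<Omega>" "H S \<in> sets \<Omega>" using Gm Hm SA' by auto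
      show "A \<times> {..<ofs} \<subseteq> A \<times> UNIV" "A \<times> {ofs..<ofs + Nn} \<subseteq> A \<times> UNIV" "A \<times> {..<ofs} \<inter> A \<times> {ofs..<ofs + Nn} = {}" by auto
      show "\<omega>' \<in> G S" if "\<omega> \<in> space \<Omega>" "\<omega>' \<in> space \<Omega>" "\<And>i. i \<in> A \<times> {..<ofs} \<Longrightarrow> \<omega> i = \<omega>' i" "\<omega> \<in> G S" for \<omega> \<omega>'
        using that dep_agg[of \<omega> \<omega>' d tt] unfolding G_def ofs_def by auto
      show "\<omega>' \<in> H S" if w: "\<omega> \<in> space \<Omega>" "\<omega>' \<in> space \<Omega>" "\<And>i. i \<in> A \<times> {ofs..<ofs + Nn} \<Longrightarrow> \<omega> i = \<omega>' i" "\<omega> \<in> H S" for \<omega> \<omega>'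
      proof -
        have "\<And>b. b \<in> S \<Longrightarrow> Y b \<omega> = Y b \<omega>'" unfolding Y_def using w SA' by (intro emp_mean_cong) auto
        then show ?thesis using w unfolding H_def E_def by auto
      qed
    qed
    also have "\<dots> \<le> measure \<Omega> (G S) * ((real (c tt) - 1) * p')" using PH[OF SA' aS True] by (simp add: mult_left_mono)
    finally show ?thesis .
  next
    case False
    have "G S = {}" unfolding G_def using False agg_set_card[OF finA] q01 by (auto simp: c_def q_def)
    then show ?thesis by simp
  qed
  have "measure \<Omega> W \<le> measure \<Omega> Ea + measure \<Omega> (\<Union>S\<in>SS. G S \<inter> H S)"
    unfolding W_def using Eam Hm Gm fSS by (intro measure_Un_le) (auto intro!: sets.finite_UN simp: SS_def)
  also have "measure \<Omega> (\<Union>S\<in>SS. G S \<inter> H S) \<le> (\<Sum>S\<in>SS. measure \<Omega> (G S \<inter> H S))"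
    using Hm Gm fSS by (intro measure_UNION_le) (auto simp: SS_def)
  also have "\<dots> \<le> (\<Sum>S\<in>SS. measure \<Omega> (G S) * ((real (c tt) - 1) * p'))" using PGH by (intro sum_mono) auto
  also have "\<dots> = (\<Sum>S\<in>SS. measure \<Omega> (G S)) * ((real (c tt) - 1) * p')" by (simp add: sum_distrib_right)
  also have "\<dots> \<le> (\<Sum>S\<in>Pow A. measure \<Omega> (G S)) * ((real (c tt) - 1) * p')"
    using b0 finA by (intro mult_right_mono sum_mono2) (auto simp: SS_def)
  also have "\<dots> \<le> (real (c tt) - 1) * p'"
    using mult_right_mono[OF sum_agg_le1[of d tt] b0] unfolding G_def by simp
  finally have "measure \<Omega> W \<le> p' + (real (c tt) - 1) * p'" using PEa by linarith
  then show ?thesis using Wm sub by blast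
qed

end


context bandit
begin

lemma escape:
  "astar \<notin> agg_set \<omega> A \<epsilon> d j \<Longrightarrow> \<exists>i<j. astar \<in> agg_set \<omega> A \<epsilon> d i \<and> astar \<notin> agg_set \<omega> A \<epsilon> d (Suc i)"
proof (induction j)
  case 0 then show ?case using astarA by simp
next
  case (Suc j)
  show ?case
  proof (cases "astar \<in> agg_set \<omega> A \<epsilon> d j")
    case True then show ?thesis using Suc.prems by auto
  next
    case False then show ?thesis using Suc.IH less_Suc_eq by blast
  qed
qed

lemma good_meas:
  "{\<omega> \<in> space \<Omega>. naive_elim \<omega> (agg_set \<omega> A \<epsilon> d tt) \<epsilon> de ofs = astar} \<in> sets \<Omega>"
proof -
  have "{\<omega> \<in> space \<Omega>. naive_elim \<omega> (agg_set \<omega> A \<epsilon> d tt) \<epsilon> de ofs = astar} =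
    (\<Union>S\<in>Pow A. {\<omega> \<in> space \<Omega>. agg_set \<omega> A \<epsilon> d tt = S} \<inter>
       {\<omega> \<in> space \<Omega>. hd (rank_list (\<lambda>b. emp_mean \<omega> b ofs (naive_N \<epsilon> de (card S))) S) \<in> {astar}})"
    using agg_set_sub[OF finA] by (auto simp: naive_elim_def simp del: singleton_iff)
  also have "\<dots> \<in> sets \<Omega>"
  proof -
    have "\<And>S. S \<subseteq> A \<Longrightarrow> {\<omega> \<in> space \<Omega>. hd (rank_list (\<lambda>b. emp_mean \<omega> b ofs (naive_N \<epsilon> de (card S))) S) \<in> {astar}} \<in> sets \<Omega>"
      by (rule rank_hd_meas[OF finA comp])
    then show ?thesis using finA aggS_meas by (intro sets.finite_UN sets.Int) auto
  qed
  finally show ?thesis .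
qed

lemma main_prob:
  fixes \<delta> :: real and p :: "nat \<Rightarrow> real" and p' :: real
  defines "d \<equiv> \<delta> / 2"
  defines "q \<equiv> d + phi (card A)"
  defines "c \<equiv> cs (card A) q"
  defines "t \<equiv> t_rounds d (card A)"
  defines "m \<equiv> agg_m \<epsilon> d"
  defines "Nn \<equiv> naive_N \<epsilon> (\<delta> / exp 1) (c (Suc t))"
  assumes q01: "0 \<le> q" "q \<le> 1"
    and m: "m > 0"
    and pi: "\<And>i. i \<le> t \<Longrightarrow> exp (- real ((i + 1) * m) * \<epsilon>\<^sup>2 / 2) \<le> p i"
    and U: "\<And>i. i \<le> t \<Longrightarrow> real (c i) * p i < real (c (Suc i))"
    and Npos: "Nn > 0"
    and p': "exp (- real Nn * \<epsilon>\<^sup>2 / 2) \<le> p'"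
    and c1: "c (Suc t) \<ge> 1"
  shows "{\<omega> \<in> space \<Omega>. saba \<omega> A \<epsilon> \<delta> = astar} \<in> sets \<Omega>"
    and "measure \<Omega> {\<omega> \<in> space \<Omega>. saba \<omega> A \<epsilon> \<delta> = astar} \<ge>
      1 - ((\<Sum>i\<le>t. p i + real (c i) * p i / (real (c (Suc i)) - real (c i) * p i)\<^sup>2) + p' + (real (c (Suc t)) - 1) * p')"
proof -
  interpret prob_space \<Omega> by (rule PS)
  have saba_eq: "saba \<omega> A \<epsilon> \<delta> = naive_elim \<omega> (agg_set \<omega> A \<epsilon> d (Suc t)) \<epsilon> (\<delta> / exp 1) (agg_off \<epsilon> d (Suc t))" for \<omega>
    by (simp add: saba_def agg_elim_def d_def t_def)
  define Good where "Good = {\<omega> \<in> space \<Omega>. saba \<omega> A \<epsilon> \<delta> = astar}"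
  have GoodM: "Good \<in> sets \<Omega>" unfolding Good_def saba_eq by (rule good_meas)
  then show "{\<omega> \<in> space \<Omega>. saba \<omega> A \<epsilon> \<delta> = astar} \<in> sets \<Omega>" by (simp add: Good_def)
  define \<beta> where "\<beta> = (\<lambda>i. real (c i) * p i / (real (c (Suc i)) - real (c i) * p i)\<^sup>2)"
  have "\<forall>i\<in>{..t}. \<exists>W \<in> sets \<Omega>. {\<omega> \<in> space \<Omega>. astar \<in> agg_set \<omega> A \<epsilon> d i \<and> astar \<notin> agg_set \<omega> A \<epsilon> d (Suc i)} \<subseteq> W
     \<and> measure \<Omega> W \<le> p i + \<beta> i"
  proof
    fix i assume "i \<in> {..t}"
    then have it: "i \<le> t" by simp
    show "\<exists>W \<in> sets \<Omega>. {\<omega> \<in> space \<Omega>. astar \<in> agg_set \<omega> A \<epsilon> d i \<and> astar \<notin> agg_set \<omega> A \<epsilon> d (Suc i)} \<subseteq> W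
     \<and> measure \<Omega> W \<le> p i + \<beta> i"
      unfolding \<beta>_def c_def q_def
      by (rule round_bound) (use q01 m pi[OF it] U[OF it] in \<open>simp_all add: q_def c_def m_def\<close>)
  qed
  from bchoice[OF this[unfolded Bex_def]] obtain Wf where Wf0: "\<forall>i\<in>{..t}. Wf i \<in> sets \<Omega> \<and>
      {\<omega> \<in> space \<Omega>. astar \<in> agg_set \<omega> A \<epsilon> d i \<and> astar \<notin> agg_set \<omega> A \<epsilon> d (Suc i)} \<subseteq> Wf i
      \<and> measure \<Omega> (Wf i) \<le> p i + \<beta> i"
    by blast
  note Wf = bspec[OF Wf0]
  have "\<exists>W \<in> sets \<Omega>. {\<omega> \<in> space \<Omega>. astar \<in> agg_set \<omega> A \<epsilon> d (Suc t) \<and>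
            naive_elim \<omega> (agg_set \<omega> A \<epsilon> d (Suc t)) \<epsilon> (\<delta> / exp 1) (agg_off \<epsilon> d (Suc t)) \<noteq> astar} \<subseteq> W
     \<and> measure \<Omega> W \<le> p' + (real (c (Suc t)) - 1) * p'"
    unfolding c_def q_def
    by (rule naive_bound) (use q01 Npos p' c1 in \<open>simp_all add: q_def c_def Nn_def\<close>)
  then obtain Wn where Wn: "Wn \<in> sets \<Omega>" "{\<omega> \<in> space \<Omega>. astar \<in> agg_set \<omega> A \<epsilon> d (Suc t) \<and>
            naive_elim \<omega> (agg_set \<omega> A \<epsilon> d (Suc t)) \<epsilon> (\<delta> / exp 1) (agg_off \<epsilon> d (Suc t)) \<noteq> astar} \<subseteq> Wn"
     "measure \<Omega> Wn \<le> p' + (real (c (Suc t)) - 1) * p'" by blast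
  define Wt where "Wt = (\<Union>i\<in>{..t}. Wf i) \<union> Wn"
  have WtM: "Wt \<in> sets \<Omega>" unfolding Wt_def using Wf Wn by (intro sets.Un sets.finite_UN) auto
  have bad: "space \<Omega> - Good \<subseteq> Wt"
  proof
    fix \<omega> assume w: "\<omega> \<in> space \<Omega> - Good"
    then have sp: "\<omega> \<in> space \<Omega>" and ne: "naive_elim \<omega> (agg_set \<omega> A \<epsilon> d (Suc t)) \<epsilon> (\<delta> / exp 1) (agg_off \<epsilon> d (Suc t)) \<noteq> astar"
      unfolding Good_def saba_eq by auto
    show "\<omega> \<in> Wt"
    proof (cases "astar \<in> agg_set \<omega> A \<epsilon> d (Suc t)")
      case True
      then show ?thesis using Wn(2) sp ne unfolding Wt_def by blast
    next
      case False
      then obtain i where "i < Suc t" "astar \<in> agg_set \<omega> A \<epsilon> d i" "astar \<notin> agg_set \<omega> A \<epsilon> d (Suc i)"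
        using escape by blast
      then show ?thesis using Wf[of i] sp unfolding Wt_def by auto
    qed
  qed
  have "measure \<Omega> (space \<Omega> - Good) \<le> measure \<Omega> Wt" by (rule finite_measure_mono[OF bad WtM])
  also have "\<dots> \<le> measure \<Omega> (\<Union>i\<in>{..t}. Wf i) + measure \<Omega> Wn"
    unfolding Wt_def using Wf Wn by (intro measure_Un_le sets.finite_UN) auto
  also have "measure \<Omega> (\<Union>i\<in>{..t}. Wf i) \<le> (\<Sum>i\<le>t. measure \<Omega> (Wf i))"
    using Wf by (intro measure_UNION_le) auto
  also have "\<dots> \<le> (\<Sum>i\<le>t. p i + \<beta> i)" using Wf by (intro sum_mono) auto
  finally have "measure \<Omega> (space \<Omega> - Good) \<le> (\<Sum>i\<le>t. p i + \<beta> i) + (p' + (real (c (Suc t)) - 1) * p')"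
    using Wn(3) by linarith
  moreover have "measure \<Omega> (space \<Omega> - Good) = 1 - measure \<Omega> Good" using prob_compl[OF GoodM] .
  ultimately show "measure \<Omega> {\<omega> \<in> space \<Omega>. saba \<omega> A \<epsilon> \<delta> = astar} \<ge>
      1 - ((\<Sum>i\<le>t. p i + real (c i) * p i / (real (c (Suc i)) - real (c i) * p i)\<^sup>2) + p' + (real (c (Suc t)) - 1) * p')"
    unfolding Good_def \<beta>_def by linarith
qed

end


lemma bern:
  fixes w w0 :: real
  assumes w0: "0 < w0" and ww: "w0 \<le> w" and n: "n \<ge> 1"
  shows "w0 ^ n + real n * w0 ^ (n - 1) * (w - w0) \<le> w ^ n"
proof -
  have "1 + real n * (w / w0 - 1) \<le> (1 + (w / w0 - 1)) ^ n"
    by (rule Bernoulli_inequality) (use w0 ww in \<open>simp add: field_simps\<close>)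
  then have "1 + real n * (w / w0 - 1) \<le> (w / w0) ^ n" by simp
  then have "w0 ^ n * (1 + real n * (w / w0 - 1)) \<le> w0 ^ n * (w / w0) ^ n"
    using w0 by (intro mult_left_mono) auto
  also have "w0 ^ n * (w / w0) ^ n = w ^ n" using w0 by (simp add: power_divide)
  also have "w0 ^ n * (1 + real n * (w / w0 - 1)) = w0 ^ n + real n * w0 ^ (n - 1) * (w - w0)"
  proof -
    have "w0 ^ n = w0 * w0 ^ (n - 1)" using n by (metis Suc_diff_le diff_Suc_1 power_Suc)
    then show ?thesis using w0 by (simp add: field_simps)
  qed
  finally show ?thesis .
qed

lemma wfacts:
  fixes x :: real
  assumes x: "x \<ge> 160000"
  defines "w \<equiv> x powr (1/32)"
  shows "w \<ge> 1454/1000" "w ^ 32 = x" "ln x \<le> 32 * (w - 1)" "x powr (3/4) = w ^ 24"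
    "x powr (1/4) = w ^ 8" "sqrt x = w ^ 16" "ln x \<ge> 10" "w > 0"
proof -
  have x0: "x > 0" using x by simp
  have w0: "w > 0" using x0 by (simp add: w_def)
  then show "w > 0" .
  have pw: "w ^ k = x powr (real k / 32)" for k
  proof -
    have "(x powr (1/32)) ^ k = x powr (real k * (1/32))" using x0 by (subst powr_power) auto
    then show ?thesis unfolding w_def by simp
  qed
  show w32: "w ^ 32 = x" using pw[of 32] x0 by simp
  show "x powr (3/4) = w ^ 24" using pw[of 24] by simp
  show "x powr (1/4) = w ^ 8" using pw[of 8] by simp
  show "sqrt x = w ^ 16" using pw[of 16] x0 by (simp add: powr_half_sqrt)
  have "ln x = 32 * ln w" unfolding w_def using x0 by simp
  also have "\<dots> \<le> 32 * (w - 1)" using ln_le_minus_one[OF w0] by simp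
  finally show "ln x \<le> 32 * (w - 1)" .
  show "w \<ge> 1454/1000"
  proof (rule ccontr)
    assume "\<not> w \<ge> 1454/1000"
    then have "w ^ 32 < (1454/1000) ^ 32" using w0 by (intro power_strict_mono) auto
    also have "\<dots> < 160000" by (simp add: power_divide)
    finally show False using w32 x by simp
  qed
  have e: "exp 1 < (272/100 :: real)" by (rule e_less_272)
  have "exp (10::real) = exp 1 ^ 10" by (simp add: exp_of_nat_mult[symmetric])
  also have "\<dots> \<le> (272/100) ^ 10" using e by (intro power_mono) auto
  also have "\<dots> \<le> x" using x by (simp add: power_divide)
  finally show "ln x \<ge> 10" using x0 by (simp add: ln_ge_iff)
qed

lemma polys:
  fixes w :: real
  assumes w: "w \<ge> 1454/1000"
  shows "192 * (w - 1) \<le> 121/10000 * w ^ 24"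
    "(32 * w - 22) / 6 \<le> 21/1000 * w ^ 16"
    "675/10000 * (40 * w - 385/10) \<le> 88/1000 * w ^ 8"
    "w ^ 8 \<ge> 19"
proof -
  define w0 :: real where "w0 = 1454/1000"
  have w0p: "0 < w0" and ww: "w0 \<le> w" using w by (auto simp: w0_def)
  have a24: "w0 ^ 24 \<ge> 7971" and a23: "w0 ^ 23 \<ge> 5482" and a16: "w0 ^ 16 \<ge> 399" and a15: "w0 ^ 15 \<ge> 274"
    and a8: "w0 ^ 8 \<ge> 1997/100" and a7: "w0 ^ 7 \<ge> 137/10"
    by (simp_all add: w0_def power_divide)
  have b24: "w0 ^ 24 + real 24 * w0 ^ (24 - 1) * (w - w0) \<le> w ^ 24" by (rule bern[OF w0p ww]) simp
  have b16: "w0 ^ 16 + real 16 * w0 ^ (16 - 1) * (w - w0) \<le> w ^ 16" by (rule bern[OF w0p ww]) simp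
  have b8: "w0 ^ 8 + real 8 * w0 ^ (8 - 1) * (w - w0) \<le> w ^ 8" by (rule bern[OF w0p ww]) simp
  have d: "w - w0 \<ge> 0" using ww by simp
  have m23: "5482 * (w - w0) \<le> w0 ^ 23 * (w - w0)" using mult_right_mono[OF a23 d] .
  have m15: "274 * (w - w0) \<le> w0 ^ 15 * (w - w0)" using mult_right_mono[OF a15 d] .
  have m7: "137/10 * (w - w0) \<le> w0 ^ 7 * (w - w0)" using mult_right_mono[OF a7 d] .
  show "192 * (w - 1) \<le> 121/10000 * w ^ 24" using b24 a24 m23 d by (simp add: w0_def)
  show "(32 * w - 22) / 6 \<le> 21/1000 * w ^ 16" using b16 a16 m15 d by (simp add: w0_def)
  show "675/10000 * (40 * w - 385/10) \<le> 88/1000 * w ^ 8" using b8 a8 m7 d by (simp add: w0_def)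
  show "w ^ 8 \<ge> 19" using b8 a8 m7 d by (simp add: w0_def)
qed


lemma pow_le_base: "(a::real) ^ n \<le> b ^ n \<Longrightarrow> 0 \<le> b \<Longrightarrow> n > 0 \<Longrightarrow> a \<le> b"
  by (cases n) (auto intro: power_le_imp_le_base)

lemma e_lower: "exp 1 \<ge> (2718/1000::real)"
  using e_approx_32 by (simp add: abs_if split: if_splits)

lemma ln2_le: "ln 2 \<le> (7/10::real)"
proof -
  have "(2::real) ^ 10 \<le> (2718/1000) ^ 7" by (simp add: power_divide)
  also have "\<dots> \<le> exp 1 ^ 7" using e_lower by (intro power_mono) auto
  also have "\<dots> = exp (7/10) ^ 10" by (simp add: exp_of_nat_mult[symmetric])
  finally have "2 \<le> exp (7/10::real)" by (rule pow_le_base) auto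
  then have "ln 2 \<le> ln (exp (7/10::real))" by (subst ln_le_cancel_iff) auto
  then show ?thesis by simp
qed

lemma exp32_le: "exp (3/2::real) \<le> 5"
proof -
  have "exp (3/2::real) ^ 2 = exp 1 ^ 3" by (simp add: exp_of_nat_mult[symmetric])
  also have "\<dots> \<le> (272/100) ^ 3" using e_less_272 by (intro power_mono) auto
  also have "\<dots> \<le> 5 ^ 2" by (simp add: power_divide)
  finally show ?thesis by (rule pow_le_base) auto
qed

lemma exp29_le: "exp (29/10::real) \<le> 20"
proof -
  have "exp (29/10::real) ^ 10 = exp 1 ^ 29" by (simp add: exp_of_nat_mult[symmetric])
  also have "\<dots> \<le> (272/100) ^ 29" using e_less_272 by (intro power_mono) auto
  also have "\<dots> \<le> 20 ^ 10" by (simp add: power_divide)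
  finally show ?thesis by (rule pow_le_base) auto
qed


locale numsetup =
  fixes n :: nat and \<delta> :: real
  assumes dpos: "\<delta> > 0" and dsmall: "\<delta> \<le> 0.05"
    and nlarge: "real n \<ge> max (1 / \<delta> ^ 4) (10 ^ 5)"
begin

abbreviation "x \<equiv> real n"
abbreviation "d \<equiv> \<delta> / 2"
abbreviation "q \<equiv> d + phi n"
abbreviation "c \<equiv> cs n q"
abbreviation "t \<equiv> t_rounds d n"
definition "w = x powr (1/32)"

lemma x_big: "x \<ge> 160000"
proof -
  have "\<delta> ^ 4 \<le> (1/20) ^ 4" using dpos dsmall by (intro power_mono) auto
  then have "1 / \<delta> ^ 4 \<ge> 1 / (1/20) ^ 4" using dpos by (intro divide_left_mono) auto
  then show ?thesis using nlarge by (simp add: power_divide)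
qed

lemma x_pos: "x > 0" using x_big by simp

lemma dx: "\<delta> ^ 4 * x \<ge> 1"
proof -
  have "x \<ge> 1 / \<delta> ^ 4" using nlarge by simp
  then show ?thesis using dpos by (simp add: field_simps)
qed

lemmas W = wfacts[OF x_big, folded w_def]
lemmas PW = polys[OF W(1)]

lemma xw: "x = w ^ 32" using W(2) by simp

lemma xd2: "x * \<delta>\<^sup>2 \<ge> w ^ 16"
proof -
  have ww: "(w ^ 16) ^ 2 = x" using xw by (simp flip: power_mult)
  have "(w ^ 16 / x) ^ 2 = (w ^ 16) ^ 2 / x ^ 2" by (simp add: power_divide)
  also have "\<dots> = 1 / x" unfolding ww using x_pos by (simp add: power2_eq_square)
  also have "\<dots> \<le> \<delta> ^ 4" using dx x_pos by (simp add: field_simps)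
  also have "\<dots> = (\<delta>\<^sup>2) ^ 2" by simp
  finally have "w ^ 16 / x \<le> \<delta>\<^sup>2" by (rule power2_le_imp_le) simp
  then show ?thesis using x_pos by (simp add: field_simps)
qed

lemma phi_sq: "(phi n)\<^sup>2 = 6 * ln x / w ^ 24"
proof -
  have "ln x > 0" using x_big by simp
  then show ?thesis unfolding phi_def using W(4) x_pos by (simp add: divide_nonneg_pos)
qed

lemma phi_pos: "phi n > 0"
proof -
  have "ln x > 0" using x_big by simp
  then show ?thesis unfolding phi_def using x_pos by simp
qed

lemma phi_le: "phi n \<le> 11/100"
proof -
  have w0: "w > 0" using W(8) .
  have "(phi n)\<^sup>2 \<le> 6 * (32 * (w - 1)) / w ^ 24" unfolding phi_sq using W(3) w0
    by (intro divide_right_mono) auto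
  also have "\<dots> \<le> 121/10000" using PW(1) w0 by (simp add: field_simps)
  also have "\<dots> = (11/100)\<^sup>2" by (simp add: power2_eq_square)
  finally show ?thesis by (rule power2_le_imp_le) simp
qed

lemma xphi2: "x * (phi n)\<^sup>2 = 6 * ln x * w ^ 8"
proof -
  have "x * (phi n)\<^sup>2 = w ^ 32 * (6 * ln x / w ^ 24)" using phi_sq xw by simp
  also have "\<dots> = 6 * ln x * w ^ 8" using W(8) by (simp add: field_simps power_add[symmetric])
  finally show ?thesis .
qed

lemma d_bounds: "d > 0" "d \<le> 1/40" using dpos dsmall by auto

lemma q_bounds: "q > 0" "q \<le> 135/1000" "q \<ge> d" "q \<ge> phi n" "q < 1"
  using d_bounds phi_pos phi_le by auto

lemma lnq: "ln (1 / q) \<ge> 3/2"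
proof -
  have "exp (3/2) \<le> 1 / q"
  proof -
    have "1 / q \<ge> 1 / (135/1000)" using q_bounds by (intro divide_left_mono) auto
    then show ?thesis using exp32_le by simp
  qed
  then have "ln (exp (3/2)) \<le> ln (1 / q)" using q_bounds by (subst ln_le_cancel_iff) auto
  then show ?thesis by simp
qed

lemma cancel_helper: "(u::real) \<noteq> 0 \<Longrightarrow> v * u * z / (2 * u) = v * z / 2"
  by simp

definition "X = (ln x + 4 * ln 2) / (4 * ln (1 / q))"

lemma X_pos: "X > 0"
proof -
  have "ln x > 0" using x_big by simp
  moreover have "ln (2::real) > 0" by simp
  ultimately have "ln x + 4 * ln 2 > 0" by linarith
  then show ?thesis unfolding X_def using lnq by (intro divide_pos_pos) auto
qed

lemma t_eq: "t = nat \<lceil>X\<rceil>" unfolding t_rounds_def X_def by simp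

lemma t_ge: "real t \<ge> X" using X_pos t_eq by linarith
lemma t_lt: "real t < X + 1" using X_pos t_eq by linarith
lemma t_1: "t \<ge> 1" using X_pos t_eq by linarith

lemma lnw: "ln w = ln x / 32" using x_pos by (simp add: w_def)

lemma t_up: "real t \<le> (32 * w - 22) / 6"
proof -
  have num: "ln x + 4 * ln 2 \<le> 32 * (w - 1) + 4 * (7/10)" using W(3) ln2_le by linarith
  have nn: "ln x + 4 * ln 2 \<ge> 0" using x_big by (simp add: add_nonneg_nonneg)
  have "X \<le> (ln x + 4 * ln 2) / 6" unfolding X_def using lnq nn by (intro divide_left_mono) auto
  also have "\<dots> \<le> (32 * (w - 1) + 4 * (7/10)) / 6" using num by (intro divide_right_mono) auto
  finally show ?thesis using t_lt by simp
qed

lemma ln2w: "ln (2 * w ^ 8) = (ln x + 4 * ln 2) / 4"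
  using W(8) by (simp add: ln_mult ln_realpow lnw)

lemma qt_le: "q ^ t \<le> 1 / (2 * w ^ 8)"
proof -
  have "ln (q ^ t) = - real t * ln (1 / q)" using q_bounds by (simp add: ln_realpow ln_div)
  also have "\<dots> \<le> - X * ln (1 / q)" using t_ge lnq by (intro mult_right_mono) auto
  also have "\<dots> = - ln (2 * w ^ 8)" unfolding X_def ln2w using lnq by simp
  also have "\<dots> = ln (1 / (2 * w ^ 8))" using W(8) by (simp add: ln_div)
  finally show ?thesis using q_bounds W(8) by (subst (asm) ln_le_cancel_iff) auto
qed

lemma qt1_ge: "q ^ (t - 1) \<ge> 1 / (2 * w ^ 8)"
proof -
  have "ln (1 / (2 * w ^ 8)) = - ln (2 * w ^ 8)" using W(8) by (simp add: ln_div)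
  also have "\<dots> = - X * ln (1 / q)" unfolding X_def ln2w using lnq by simp
  also have "\<dots> \<le> - real (t - 1) * ln (1 / q)" using t_lt t_1 lnq by (intro mult_right_mono) (auto simp: of_nat_diff)
  also have "\<dots> = ln (q ^ (t - 1))" using q_bounds by (simp add: ln_realpow ln_div)
  finally show ?thesis using q_bounds W(8) by (subst (asm) ln_le_cancel_iff) auto
qed

lemma xqT: "x * q ^ (t + 1) \<ge> 30"
proof -
  have tt: "t + 1 = 2 + (t - 1)" using t_1 by simp
  have "q ^ (t + 1) = q\<^sup>2 * q ^ (t - 1)" unfolding tt power_add by simp
  then have "x * q ^ (t + 1) = x * q\<^sup>2 * q ^ (t - 1)" by simp
  also have "\<dots> \<ge> x * q\<^sup>2 * (1 / (2 * w ^ 8))" using qt1_ge x_pos by (intro mult_left_mono) auto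
  finally have a: "x * q ^ (t + 1) \<ge> x * q\<^sup>2 / (2 * w ^ 8)" by simp
  have xw2: "x = w ^ 24 * w ^ 8" by (subst power_add[symmetric]) (simp add: xw)
  have w8: "w ^ 8 \<noteq> 0" using W(8) by simp
  have "x * q\<^sup>2 / (2 * w ^ 8) = w ^ 24 * w ^ 8 * q\<^sup>2 / (2 * w ^ 8)" by (subst xw2) (rule refl)
  also have "\<dots> = w ^ 24 * q\<^sup>2 / 2" by (rule cancel_helper[OF w8])
  also have "\<dots> \<ge> w ^ 24 * (phi n)\<^sup>2 / 2" using q_bounds phi_pos W(8) by (intro divide_right_mono mult_left_mono power_mono) auto
  also have "w ^ 24 * (phi n)\<^sup>2 / 2 = 3 * ln x" unfolding phi_sq using W(8) by simp
  finally show ?thesis using a W(7) by linarith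
qed

end


lemma nat_floor_bounds: "(0::real) \<le> y \<Longrightarrow> real (nat \<lfloor>y\<rfloor>) \<le> y" "(0::real) \<le> y \<Longrightarrow> real (nat \<lfloor>y\<rfloor>) \<ge> y - 1"
proof -
  assume y: "0 \<le> y"
  then have e: "real (nat \<lfloor>y\<rfloor>) = real_of_int \<lfloor>y\<rfloor>" by simp
  show "real (nat \<lfloor>y\<rfloor>) \<le> y" unfolding e by simp
  show "real (nat \<lfloor>y\<rfloor>) \<ge> y - 1" unfolding e by linarith
qed

lemma cs_step: "0 \<le> q \<Longrightarrow> real (cs n q (Suc i)) \<le> real (cs n q i) * q"
  "0 \<le> q \<Longrightarrow> real (cs n q (Suc i)) \<ge> real (cs n q i) * q - 1"
  by (simp_all add: nat_floor_bounds)

lemma cs_le: "0 \<le> q \<Longrightarrow> real (cs n q i) \<le> real n * q ^ i"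
proof (induction i)
  case 0 then show ?case by simp
next
  case (Suc i)
  have "real (cs n q (Suc i)) \<le> real (cs n q i) * q" by (rule cs_step(1)[OF Suc.prems])
  also have "\<dots> \<le> real n * q ^ i * q" using Suc by (intro mult_right_mono) auto
  finally show ?case by (simp add: algebra_simps)
qed

lemma cs_ge: "0 \<le> q \<Longrightarrow> q < 1 \<Longrightarrow> real (cs n q i) \<ge> real n * q ^ i - 1 / (1 - q)"
proof (induction i)
  case 0
  then show ?case by simp
next
  case (Suc i)
  have "real (cs n q (Suc i)) \<ge> real (cs n q i) * q - 1" by (rule cs_step(2)[OF Suc.prems(1)])
  moreover have "real (cs n q i) * q \<ge> (real n * q ^ i - 1 / (1 - q)) * q" using Suc by (intro mult_right_mono) auto
  moreover have "(real n * q ^ i - 1 / (1 - q)) * q - 1 = real n * q ^ Suc i - 1 / (1 - q)"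
    using Suc.prems by (simp add: field_simps)
  ultimately show ?case by linarith
qed

lemma alg1: "(u::real) > 0 \<Longrightarrow> Q > 0 \<Longrightarrow> u * p / (7/8 * (u * Q))\<^sup>2 = (64/49) * p / (u * Q\<^sup>2)"
  by (simp add: field_simps power2_eq_square)

lemma alg2: "(y::real) > 0 \<Longrightarrow> Q > 0 \<Longrightarrow> (64/49) * p / (y * Q ^ i / 2 * Q\<^sup>2) = (128/49) * (p / Q ^ (i + 1)) / (y * Q)"
  by (simp add: field_simps power2_eq_square)

context numsetup
begin

lemma c_le: "real (c i) \<le> x * q ^ i" using cs_le q_bounds by simp
lemma c_ge: "real (c i) \<ge> x * q ^ i - 1 / (1 - q)" using cs_ge q_bounds by simp
lemma c_step: "real (c (Suc i)) \<ge> real (c i) * q - 1" using cs_step(2) q_bounds by simp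

lemma inv1q: "1 / (1 - q) \<le> 2" "q / (1 - q) \<le> 1"
  using q_bounds by (simp_all add: field_simps)

lemma xqi: "i \<le> t \<Longrightarrow> x * q ^ (i + 1) \<ge> 30"
proof -
  assume "i \<le> t"
  then have "q ^ (t + 1) \<le> q ^ (i + 1)" using q_bounds by (intro power_decreasing) auto
  then have "x * q ^ (t + 1) \<le> x * q ^ (i + 1)" using x_pos by simp
  then show ?thesis using xqT by linarith
qed

lemma ciq: "i \<le> t \<Longrightarrow> real (c i) * q \<ge> 10"
proof -
  assume it: "i \<le> t"
  have "real (c i) * q \<ge> (x * q ^ i - 1 / (1 - q)) * q" using c_ge q_bounds by (intro mult_right_mono) auto
  also have "(x * q ^ i - 1 / (1 - q)) * q = x * (q ^ i * q) - q / (1 - q)" by (simp add: left_diff_distrib mult.assoc)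
  also have "q ^ i * q = q ^ (i + 1)" by simp
  finally show ?thesis using xqi[OF it] inv1q by linarith
qed

lemma ci_half: "i \<le> t \<Longrightarrow> real (c i) \<ge> x * q ^ i / 2"
proof -
  assume it: "i \<le> t"
  have "x * q ^ (i + 1) \<le> x * q ^ i" using q_bounds x_pos by (simp add: mult_left_le)
  then have "x * q ^ i \<ge> 30" using xqi[OF it] by linarith
  then show ?thesis using c_ge[of i] inv1q by linarith
qed

lemma c1T: "c (Suc t) \<ge> 1"
proof -
  have a: "real (c (Suc t)) \<ge> x * q ^ (Suc t) - 1 / (1 - q)" by (rule c_ge)
  have b: "x * q ^ (Suc t) \<ge> 30" using xqT by (simp only: Suc_eq_plus1)
  have "real (c (Suc t)) \<ge> 28" using a b inv1q by linarith
  then show ?thesis by linarith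
qed

lemma beta_i:
  assumes i1: "1 \<le> i" and it: "i \<le> t"
  shows "real (c i) * d ^ (i + 1) < real (c (Suc i))"
    and "real (c i) * d ^ (i + 1) / (real (c (Suc i)) - real (c i) * d ^ (i + 1))\<^sup>2 \<le> (256/49) / (x * \<delta>)"
proof -
  define p where "p = d ^ (i + 1)"
  define ci where "ci = real (c i)"
  define k where "k = real (c (Suc i))"
  have p0: "p > 0" using d_bounds by (simp add: p_def)
  have pd2: "p \<le> d ^ 2" unfolding p_def using d_bounds i1 by (intro power_decreasing) auto
  have pq: "p \<le> q / 40"
  proof -
    have "d ^ 2 = d * d" by (simp add: power2_eq_square)
    also have "\<dots> \<le> d * (1/40)" using d_bounds by (intro mult_left_mono) auto
    also have "\<dots> \<le> q / 40" using q_bounds by simp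
    finally show ?thesis using pd2 by linarith
  qed
  have ciq': "ci * q \<ge> 10" using ciq[OF it] by (simp add: ci_def)
  have ci0: "ci \<ge> 0" by (simp add: ci_def)
  have kk: "k \<ge> ci * q - 1" using c_step by (simp add: k_def ci_def)
  have U: "ci * p \<le> ci * q / 40" using mult_left_mono[OF pq ci0] by simp
  have kU: "k - ci * p \<ge> 7/8 * (ci * q)" using kk U ciq' by linarith
  have cqp: "ci * q > 0" using ciq' by linarith
  have "ci * p < k"
  proof -
    obtain Z where Z: "Z = ci * q" by blast
    have "7/8 * Z \<le> k - ci * p" "0 < Z" using kU cqp Z by auto
    then show ?thesis by linarith
  qed
  then show "real (c i) * d ^ (i + 1) < real (c (Suc i))" unfolding p_def ci_def k_def .
  have "ci * p / (k - ci * p)\<^sup>2 \<le> ci * p / (7/8 * (ci * q))\<^sup>2"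
    using kU cqp p0 ci0 by (intro divide_left_mono power_mono mult_pos_pos) auto
  also have "\<dots> = (64/49) * p / (ci * q\<^sup>2)"
  proof (rule alg1)
    show "ci > 0" using cqp q_bounds ci0 by (metis linorder_neqE_linordered_idom mult_eq_0_iff not_less)
  qed (use q_bounds in auto)
  also have "\<dots> \<le> (64/49) * p / (x * q ^ i / 2 * q\<^sup>2)"
  proof -
    have "x * q ^ i / 2 \<le> ci" using ci_half[OF it] by (simp add: ci_def)
    moreover have "x * q ^ i / 2 > 0" using x_pos q_bounds by simp
    ultimately show ?thesis using p0 q_bounds by (intro divide_left_mono mult_right_mono mult_pos_pos) auto
  qed
  also have "\<dots> = (128/49) * (p / q ^ (i + 1)) / (x * q)" by (rule alg2) (use q_bounds x_pos in auto)
  also have "\<dots> \<le> (128/49) * 1 / (x * q)"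
  proof -
    have "p \<le> q ^ (i + 1)" unfolding p_def using d_bounds q_bounds by (intro power_mono) auto
    then have "p / q ^ (i + 1) \<le> 1" using q_bounds by simp
    then show ?thesis using x_pos q_bounds by (intro divide_right_mono mult_left_mono) auto
  qed
  also have "\<dots> \<le> (128/49) * 1 / (x * d)" using x_pos q_bounds d_bounds by (intro divide_left_mono mult_left_mono) auto
  also have "\<dots> = (256/49) / (x * \<delta>)" by simp
  finally show "real (c i) * d ^ (i + 1) / (real (c (Suc i)) - real (c i) * d ^ (i + 1))\<^sup>2 \<le> (256/49) / (x * \<delta>)"
    unfolding p_def ci_def k_def .
qed

end


lemma alg3: "(y::real) > 0 \<Longrightarrow> f > 0 \<Longrightarrow> y * dd / (y * f / 2)\<^sup>2 = 4 * dd / (y * f\<^sup>2)"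
  by (simp add: field_simps power2_eq_square)

context numsetup
begin

lemma beta_0:
  shows "real (c 0) * d ^ (0 + 1) < real (c (Suc 0))"
    and "real (c 0) * d ^ (0 + 1) / (real (c (Suc 0)) - real (c 0) * d ^ (0 + 1))\<^sup>2 \<le> \<delta> / 500"
proof -
  define k where "k = real (c (Suc 0))"
  define f where "f = phi n"
  have c0: "real (c 0) = x" by simp
  have k1: "k \<ge> x * q - 1" using c_step[of 0] by (simp add: k_def)
  have f0: "f > 0" "f \<le> 1" using phi_pos phi_le by (auto simp: f_def)
  have xf2: "x * f\<^sup>2 \<ge> 1140"
  proof -
    have "x * f\<^sup>2 = 6 * ln x * w ^ 8" using xphi2 by (simp add: f_def)
    moreover have "6 * ln x * w ^ 8 \<ge> 6 * 10 * 19" using W(7) PW(4) by (intro mult_mono) auto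
    ultimately show ?thesis by simp
  qed
  have "f\<^sup>2 \<le> f" using f0 by (simp add: power2_eq_square mult_left_le)
  then have "x * f\<^sup>2 \<le> x * f" using x_pos by simp
  then have xf: "x * f \<ge> 1140" using xf2 by linarith
  have kd: "k - x * d \<ge> x * f / 2" using k1 xf by (simp add: f_def algebra_simps)
  have xfp: "x * f / 2 > 0" using xf by simp
  have "x * d < k" using kd xfp by linarith
  then show "real (c 0) * d ^ (0 + 1) < real (c (Suc 0))" by (simp add: k_def)
  have "x * d / (k - x * d)\<^sup>2 \<le> x * d / (x * f / 2)\<^sup>2"
    using kd xfp x_pos d_bounds by (intro divide_left_mono power_mono mult_pos_pos) auto
  also have "\<dots> = 4 * d / (x * f\<^sup>2)" by (rule alg3) (use x_pos f0 in auto)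
  also have "\<dots> \<le> 4 * d / 1140" using xf2 d_bounds by (intro divide_left_mono) auto
  also have "\<dots> \<le> \<delta> / 500" using dpos by simp
  finally show "real (c 0) * d ^ (0 + 1) / (real (c (Suc 0)) - real (c 0) * d ^ (0 + 1))\<^sup>2 \<le> \<delta> / 500"
    by (simp add: k_def)
qed

lemma U_all: "i \<le> t \<Longrightarrow> real (c i) * d ^ (i + 1) < real (c (Suc i))"
  using beta_0(1) beta_i(1)[of i] by (cases "i = 0") auto

lemma budget:
  "(\<Sum>i\<le>t. d ^ (i + 1) + real (c i) * d ^ (i + 1) / (real (c (Suc i)) - real (c i) * d ^ (i + 1))\<^sup>2)
     + \<delta> / exp 1 \<le> \<delta>"
proof -
  define \<beta> where "\<beta> = (\<lambda>i. real (c i) * d ^ (i + 1) / (real (c (Suc i)) - real (c i) * d ^ (i + 1))\<^sup>2)"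
  define K where "K = (256/49) / (x * \<delta>)"
  have geo: "(\<Sum>i\<le>t. d ^ (i + 1)) \<le> \<delta> * (20/39)"
  proof -
    have "(1 - d) * (\<Sum>i\<le>t. d ^ i) = 1 - d ^ Suc t" by (rule sum_gp_basic)
    also have "\<dots> \<le> 1" using d_bounds by simp
    finally have S: "(\<Sum>i\<le>t. d ^ i) \<le> 1 / (1 - d)" using d_bounds by (simp add: field_simps)
    have "(\<Sum>i\<le>t. d ^ (i + 1)) = d * (\<Sum>i\<le>t. d ^ i)" by (simp add: sum_distrib_left)
    also have "\<dots> \<le> d * (1 / (1 - d))" by (rule mult_left_mono[OF S]) (use d_bounds in simp)
    also have "\<dots> \<le> \<delta> * (20/39)" using d_bounds dpos by (simp add: field_simps)
    finally show ?thesis .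
  qed
  have bsum: "(\<Sum>i\<le>t. \<beta> i) \<le> (\<Sum>i\<le>t. if i = 0 then \<delta> / 500 else K)"
  proof (rule sum_mono)
    fix i assume "i \<in> {..t}"
    then show "\<beta> i \<le> (if i = 0 then \<delta> / 500 else K)"
      using beta_0(2) beta_i(2)[of i] by (cases "i = 0") (auto simp: \<beta>_def K_def)
  qed
  also have "(\<Sum>i\<le>t. if i = 0 then \<delta> / 500 else K) = \<delta> / 500 + real t * K"
  proof -
    have "(\<Sum>i\<le>t. if i = 0 then \<delta> / 500 else K) = (\<Sum>i\<in>{..t} \<inter> {i. i = 0}. \<delta> / 500) + (\<Sum>i\<in>{..t} \<inter> - {i. i = 0}. K)"
      by (rule sum.If_cases) simp
    also have "{..t} \<inter> {i. i = 0} = {0}" by auto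
    also have "{..t} \<inter> - {i. i = 0} = {1..t}" by auto
    finally show ?thesis by simp
  qed
  also have "real t * K \<le> 11/100 * \<delta>"
  proof -
    have "real t \<le> 21/1000 * w ^ 16" using t_up PW(2) by linarith
    also have "\<dots> \<le> 21/1000 * (x * \<delta>\<^sup>2)" using xd2 by simp
    finally have "real t * K \<le> 21/1000 * (x * \<delta>\<^sup>2) * K" using K_def x_pos dpos by (intro mult_right_mono) auto
    also have "\<dots> = 21/1000 * (256/49) * \<delta>" using x_pos dpos by (simp add: K_def field_simps power2_eq_square)
    finally show ?thesis using dpos by linarith
  qed
  finally have bs: "(\<Sum>i\<le>t. \<beta> i) \<le> \<delta> / 500 + 11/100 * \<delta>" by simp
  have ee: "\<delta> / exp 1 \<le> \<delta> * (1000/2718)"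
  proof -
    have "1 / exp 1 \<le> 1 / (2718/1000::real)" using e_lower by (intro divide_left_mono) auto
    then show ?thesis using dpos by (simp add: divide_simps mult_left_mono)
  qed
  have "(\<Sum>i\<le>t. d ^ (i + 1) + \<beta> i) = (\<Sum>i\<le>t. d ^ (i + 1)) + (\<Sum>i\<le>t. \<beta> i)" by (simp add: sum.distrib)
  then have "(\<Sum>i\<le>t. d ^ (i + 1) + \<beta> i) + \<delta> / exp 1 \<le> \<delta> * (20/39) + (\<delta> / 500 + 11/100 * \<delta>) + \<delta> * (1000/2718)"
    using geo bs ee by linarith
  also have "\<dots> \<le> \<delta>" using dpos by simp
  finally show ?thesis unfolding \<beta>_def .
qed

end


lemma nat_ceil_le: "(0::real) \<le> y \<Longrightarrow> real (nat \<lceil>y\<rceil>) \<le> y + 1"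
  by linarith

lemma suc_le_pow2: "real (i + 1) \<le> 2 ^ i"
proof -
  have "i < 2 ^ i" by (rule less_exp)
  then have "i + 1 \<le> 2 ^ i" by linarith
  then have "real (i + 1) \<le> real (2 ^ i)" by (rule of_nat_mono)
  then show ?thesis by simp
qed

lemma lamfin: "29/10 \<le> (L::real) \<Longrightarrow> (L + 12/10) * (100/73) + 88/1000 \<le> 2 * L"
  unfolding distrib_right by linarith

context numsetup
begin

abbreviation "\<Lambda> \<equiv> ln (1 / \<delta>)"

lemma Lam_ge: "\<Lambda> \<ge> 29/10"
proof -
  have "1 / \<delta> \<ge> 20" using dpos dsmall by (simp add: field_simps)
  then have "exp (29/10) \<le> 1 / \<delta>" using exp29_le by linarith
  then have "ln (exp (29/10)) \<le> \<Lambda>" using dpos by (subst ln_le_cancel_iff) auto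
  then show ?thesis by simp
qed

lemma Lam_le: "\<Lambda> \<le> ln x / 4"
proof -
  have "(1 / \<delta>) ^ 4 \<le> x" using dx dpos by (simp add: field_simps power_divide)
  then have "ln ((1 / \<delta>) ^ 4) \<le> ln x" using dpos x_pos by (subst ln_le_cancel_iff) auto
  then show ?thesis using dpos by (simp add: ln_realpow)
qed

lemma sum_ci: "(\<Sum>i\<le>t. real (c i) * real (i + 1)) \<le> x * (100/73)"
proof -
  have "(\<Sum>i\<le>t. real (c i) * real (i + 1)) \<le> (\<Sum>i\<le>t. x * q ^ i * 2 ^ i)"
    using c_le suc_le_pow2 q_bounds x_pos by (intro sum_mono mult_mono) auto
  also have "\<dots> = x * (\<Sum>i\<le>t. (2 * q) ^ i)"
  proof -
    have "\<And>i. x * q ^ i * 2 ^ i = x * (2 * q) ^ i" by (simp only: power_mult_distrib mult_ac)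
    then show ?thesis by (simp only: sum_distrib_left)
  qed
  also have "\<dots> \<le> x * (100/73)"
  proof -
    have "(1 - 2 * q) * (\<Sum>i\<le>t. (2 * q) ^ i) = 1 - (2 * q) ^ Suc t" by (rule sum_gp_basic)
    also have "\<dots> \<le> 1" using q_bounds by simp
    finally have "(\<Sum>i\<le>t. (2 * q) ^ i) \<le> 1 / (1 - 2 * q)" using q_bounds by (simp add: field_simps)
    also have "\<dots> \<le> 100/73" using q_bounds by (simp add: field_simps)
    finally show ?thesis using x_pos by simp
  qed
  finally show ?thesis .
qed

lemma cT_up: "real (c (Suc t)) \<le> x * (135/1000) / (2 * w ^ 8)"
proof -
  have "real (c (Suc t)) \<le> x * q ^ Suc t" by (rule c_le)
  also have "\<dots> = x * q * q ^ t" by simp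
  also have "\<dots> \<le> x * q * (1 / (2 * w ^ 8))" using qt_le x_pos q_bounds by (intro mult_left_mono) auto
  also have "\<dots> \<le> x * (135/1000) * (1 / (2 * w ^ 8))" using x_pos q_bounds W(8) by (intro mult_right_mono mult_left_mono) auto
  finally show ?thesis by simp
qed

lemma samples_bound:
  fixes \<epsilon> :: real
  assumes e0: "0 < \<epsilon>" and e1: "\<epsilon> \<le> 1"
  shows "real (\<Sum>i\<le>t. c i * ((i + 1) * agg_m \<epsilon> d)) + real (c (Suc t) * naive_N \<epsilon> (\<delta> / exp 1) (c (Suc t)))
     \<le> 4 * x / \<epsilon>\<^sup>2 * \<Lambda>"
proof -
  define E where "E = 2 / \<epsilon>\<^sup>2"
  define m where "m = agg_m \<epsilon> d"
  define cT where "cT = real (c (Suc t))"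
  define Nn where "Nn = naive_N \<epsilon> (\<delta> / exp 1) (c (Suc t))"
  have E0: "E > 0" using e0 by (simp add: E_def)
  have E1: "1 \<le> E * (1/2)" using e0 e1 by (simp add: E_def field_simps power_le_one)
  have cT1: "cT \<ge> 1" using c1T by (simp add: cT_def)
  have ln1d: "ln (1 / d) = ln 2 + \<Lambda>" using dpos by (simp add: ln_div)
  have m_le: "real m \<le> E * (\<Lambda> + 7/10 + 1/2)"
  proof -
    have "real m \<le> E * ln (1 / d) + 1" unfolding m_def agg_m_def E_def
      using d_bounds e0 by (intro nat_ceil_le) (auto intro!: mult_nonneg_nonneg)
    also have "\<dots> \<le> E * (\<Lambda> + 7/10) + E * (1/2)"
    proof -
      have a: "E * (ln 2 + \<Lambda>) \<le> E * (\<Lambda> + 7/10)" using ln2_le E0 by (intro mult_left_mono) linarith+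
      show ?thesis unfolding ln1d using a E1 by linarith
    qed
    finally show ?thesis by (simp add: algebra_simps)
  qed
  have lncT: "ln (cT / (\<delta> / exp 1)) = ln cT + 1 + \<Lambda>" using cT1 dpos by (simp add: ln_div ln_mult)
  have N_le: "real Nn \<le> E * (ln cT + 1 + \<Lambda> + 1/2)"
  proof -
    have pos: "0 \<le> ln cT + 1 + \<Lambda>" using cT1 Lam_ge by simp
    have "real Nn \<le> E * ln (cT / (\<delta> / exp 1)) + 1" unfolding Nn_def naive_N_def E_def cT_def[symmetric]
      using pos lncT e0 by (intro nat_ceil_le) (auto intro!: mult_nonneg_nonneg)
    also have "\<dots> \<le> E * (ln cT + 1 + \<Lambda>) + E * (1/2)" unfolding lncT using E1 by simp
    finally show ?thesis by (simp add: algebra_simps)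
  qed
  have part1: "real (\<Sum>i\<le>t. c i * ((i + 1) * m)) \<le> E * x * ((\<Lambda> + 12/10) * (100/73))"
  proof -
    have "real (\<Sum>i\<le>t. c i * ((i + 1) * m)) = (\<Sum>i\<le>t. real (c i) * real (i + 1)) * real m"
      by (simp only: of_nat_sum of_nat_mult sum_distrib_right sum_distrib_left mult_ac)
    also have "\<dots> \<le> (x * (100/73)) * (E * (\<Lambda> + 7/10 + 1/2))"
      using sum_ci m_le by (intro mult_mono) (auto intro!: sum_nonneg)
    finally show ?thesis by (simp add: algebra_simps)
  qed
  have part2: "cT * real Nn \<le> E * x * (88/1000)"
  proof -
    have lc: "ln cT \<le> 32 * (w - 1)" using W(3) cT1 c_le[of "Suc t"] ln_le_cancel_iff
    proof -
      have "cT \<le> x * q ^ Suc t" unfolding cT_def by (rule c_le)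
      also have "\<dots> \<le> x * 1" using x_pos q_bounds by (intro mult_left_mono power_le_one) auto
      finally have "ln cT \<le> ln x" using cT1 by (subst ln_le_cancel_iff) auto
      then show ?thesis using W(3) by linarith
    qed
    have L8: "\<Lambda> \<le> 8 * (w - 1)" using Lam_le W(3) by linarith
    have "ln cT + \<Lambda> \<le> 32 * (w - 1) + 8 * (w - 1)" by (rule add_mono[OF lc L8])
    then have "ln cT + 1 + \<Lambda> + 1/2 \<le> 40 * w - 385/10" by (simp add: algebra_simps)
    have pos: "0 \<le> ln cT + 1 + \<Lambda> + 1/2" using cT1 Lam_ge by simp
    have "cT * real Nn \<le> cT * (E * (ln cT + 1 + \<Lambda> + 1/2))" using N_le cT1 by (intro mult_left_mono) auto
    also have "\<dots> \<le> (x * (135/1000) / (2 * w ^ 8)) * (E * (40 * w - 385/10))"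
      using cT_up \<open>ln cT + 1 + \<Lambda> + 1/2 \<le> 40 * w - 385/10\<close> pos E0 cT1
      by (intro mult_mono) (auto simp: cT_def)
    also have "\<dots> = E * x * (675/10000 * (40 * w - 385/10) / w ^ 8)" using W(8) by (simp add: field_simps)
    also have "\<dots> \<le> E * x * (88/1000)"
    proof -
      have "675/10000 * (40 * w - 385/10) / w ^ 8 \<le> 88/1000" using PW(3) W(8) by (simp add: field_simps)
      then show ?thesis using E0 x_pos by (intro mult_left_mono) auto
    qed
    finally show ?thesis .
  qed
  have "real (\<Sum>i\<le>t. c i * ((i + 1) * m)) + cT * real Nn \<le> E * x * ((\<Lambda> + 12/10) * (100/73)) + E * x * (88/1000)"
    using add_mono[OF part1 part2] .
  also have "\<dots> = E * x * ((\<Lambda> + 12/10) * (100/73) + 88/1000)" by (simp add: distrib_left)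
  also have "\<dots> \<le> E * x * (2 * \<Lambda>)"
  proof -
    have "(\<Lambda> + 12/10) * (100/73) + 88/1000 \<le> 2 * \<Lambda>" using Lam_ge by (rule lamfin)
    then show ?thesis using E0 x_pos by (intro mult_left_mono) auto
  qed
  also have "\<dots> = 4 * x / \<epsilon>\<^sup>2 * \<Lambda>" by (simp add: E_def)
  finally show ?thesis by (simp add: m_def cT_def Nn_def)
qed

end


lemma mean01:
  assumes P: "prob_space M" and B: "sets M = sets borel" and S: "AE x in M. x \<in> {0..1::real}"
  shows "0 \<le> (\<integral>x. x \<partial>M)" "(\<integral>x. x \<partial>M) \<le> 1"
proof -
  interpret prob_space M by (rule P)
  have m: "(\<lambda>x::real. x) \<in> borel_measurable M" by (simp add: measurable_cong_sets[OF B refl])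
  have nb: "AE x in M. norm x \<le> (1::real)" using S by (rule eventually_mono) auto
  have int: "integrable M (\<lambda>x::real. x)"
    by (rule integrable_const_bound[OF nb m])
  have ge: "AE x in M. 0 \<le> (x::real)" using S by (rule eventually_mono) auto
  have le: "AE x in M. (x::real) \<le> 1" using S by (rule eventually_mono) auto
  show "0 \<le> (\<integral>x. x \<partial>M)" by (rule integral_nonneg_AE[OF ge])
  have "(\<integral>x. x \<partial>M) \<le> (\<integral>x. 1 \<partial>M)"
    by (rule integral_mono_AE[OF int _ le]) simp
  then show "(\<integral>x. x \<partial>M) \<le> 1" by (simp add: prob_space)
qed

theorem claim3:
  fixes A :: "'a::linorder set" and D :: "'a \<Rightarrow> real measure"
    and astar :: 'a and n :: nat and \<epsilon> \<delta> :: real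
  assumes finA: "finite A" and cardA: "card A = n"
    and distr: "\<And>a. a \<in> A \<Longrightarrow> prob_space (D a)"
    and borel: "\<And>a. a \<in> A \<Longrightarrow> sets (D a) = sets borel"
    and supp: "\<And>a. a \<in> A \<Longrightarrow> (AE x in D a. x \<in> {0..1})"
    and best: "astar \<in> A" "\<And>a. a \<in> A \<Longrightarrow> arm_mean D a \<le> arm_mean D astar"
    and unique: "\<And>a. a \<in> A \<Longrightarrow> a \<noteq> astar \<Longrightarrow> arm_mean D astar - arm_mean D a > \<epsilon>"
    and eps: "\<epsilon> > 0"
    and dpos: "\<delta> > 0" and dsmall: "\<delta> \<le> 0.05"
    and nlarge: "real n \<ge> max (1 / \<delta> ^ 4) (10 ^ 5)"
  shows "prob_space.prob (sample_space A D)
           {\<omega> \<in> space (sample_space A D).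
              arm_mean D astar - arm_mean D (saba \<omega> A \<epsilon> \<delta>) \<le> \<epsilon>} \<ge> 1 - \<delta>
       \<and> (\<forall>\<omega> \<in> space (sample_space A D).
              real (saba_samples \<omega> A \<epsilon> \<delta>) \<le> 4 * real n / \<epsilon>\<^sup>2 * ln (1 / \<delta>))"
proof -
  interpret B: bandit A D astar \<epsilon>
    using finA distr borel supp best(1) unique eps by (rule bandit.intro)
  interpret N: numsetup n \<delta>
    using dpos dsmall nlarge by unfold_locales
  let ?d = "\<delta> / 2"
  let ?q = "\<delta> / 2 + phi n"
  let ?c = "cs n (\<delta> / 2 + phi n)"
  let ?t = "t_rounds (\<delta> / 2) n"
  let ?m = "agg_m \<epsilon> (\<delta> / 2)"
  let ?Nn = "naive_N \<epsilon> (\<delta> / exp 1) (cs n (\<delta> / 2 + phi n) (Suc (t_rounds (\<delta> / 2) n)))"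
  let ?cT = "real (cs n (\<delta> / 2 + phi n) (Suc (t_rounds (\<delta> / 2) n)))"
  have q01: "0 \<le> ?q" "?q \<le> 1" using N.q_bounds by auto
  have d01: "0 < ?d" "?d < 1" using N.d_bounds by auto
  have lnd: "ln (1 / ?d) > 0" using d01 by simp
  have m_ge: "real ?m \<ge> 2 / \<epsilon>\<^sup>2 * ln (1 / ?d)" unfolding agg_m_def by linarith
  have m0: "?m > 0"
  proof -
    have "2 / \<epsilon>\<^sup>2 * ln (1 / ?d) > 0" using eps lnd by simp
    then show ?thesis using m_ge by linarith
  qed
  have pi: "exp (- real ((i + 1) * ?m) * \<epsilon>\<^sup>2 / 2) \<le> ?d ^ (i + 1)" for i
  proof -
    have lm: "ln (1 / ?d) \<le> real ?m * \<epsilon>\<^sup>2 / 2"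
    proof -
      have "2 / \<epsilon>\<^sup>2 * ln (1 / ?d) * (\<epsilon>\<^sup>2 / 2) \<le> real ?m * (\<epsilon>\<^sup>2 / 2)" using m_ge eps by (intro mult_right_mono) auto
      then show ?thesis using eps by simp
    qed
    have "real (i + 1) * ln (1 / ?d) \<le> real (i + 1) * (real ?m * \<epsilon>\<^sup>2 / 2)"
      by (rule mult_left_mono[OF lm]) simp
    moreover have "ln (1 / ?d) = - ln ?d" using d01 by (simp add: ln_div)
    ultimately have "- real ((i + 1) * ?m) * \<epsilon>\<^sup>2 / 2 \<le> real (i + 1) * ln ?d" by (simp add: algebra_simps)
    then have "exp (- real ((i + 1) * ?m) * \<epsilon>\<^sup>2 / 2) \<le> exp (real (i + 1) * ln ?d)" by simp
    also have "\<dots> = ?d ^ (i + 1)" by (subst exp_of_nat_mult) (use d01 in simp)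
    finally show ?thesis .
  qed
  have cT1: "?c (Suc ?t) \<ge> 1" using N.c1T by simp
  have cT1': "?cT \<ge> 1" using cT1 by simp
  have e1: "exp 1 > (1::real)" by simp
  have rat: "?cT / (\<delta> / exp 1) > 1"
  proof -
    have "\<delta> \<le> 1" using dsmall by simp
    then have "\<delta> < exp 1" using e1 by linarith
    then have de: "\<delta> / exp 1 < 1" by simp
    have "C / (\<delta> / exp 1) > 1" if "C \<ge> 1" for C :: real
    proof -
      have "\<delta> / exp 1 < C" using de that by linarith
      then show ?thesis using dpos by (simp add: field_simps)
    qed
    then show ?thesis using cT1' by blast
  qed
  have N_ge: "real ?Nn \<ge> 2 / \<epsilon>\<^sup>2 * ln (?cT / (\<delta> / exp 1))" unfolding naive_N_def by linarith
  have N0: "?Nn > 0"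
  proof -
    have "2 / \<epsilon>\<^sup>2 * ln (?cT / (\<delta> / exp 1)) > 0" using eps rat by simp
    then show ?thesis using N_ge by linarith
  qed
  define p' where "p' = \<delta> / (exp 1 * ?cT)"
  have pp: "exp (- real ?Nn * \<epsilon>\<^sup>2 / 2) \<le> p'"
  proof -
    have "ln (?cT / (\<delta> / exp 1)) \<le> real ?Nn * \<epsilon>\<^sup>2 / 2"
    proof -
      have "2 / \<epsilon>\<^sup>2 * ln (?cT / (\<delta> / exp 1)) * (\<epsilon>\<^sup>2 / 2) \<le> real ?Nn * (\<epsilon>\<^sup>2 / 2)" using N_ge eps by (intro mult_right_mono) auto
      then show ?thesis using eps by simp
    qed
    then have "exp (- real ?Nn * \<epsilon>\<^sup>2 / 2) \<le> exp (- ln (?cT / (\<delta> / exp 1)))" by simp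
    also have "\<dots> = 1 / (?cT / (\<delta> / exp 1))" using rat by (simp add: exp_minus exp_ln inverse_eq_divide)
    also have "\<dots> = p'" unfolding p'_def by simp
    finally show ?thesis .
  qed
  have U: "i \<le> ?t \<Longrightarrow> real (?c i) * ?d ^ (i + 1) < real (?c (Suc i))" for i
    using N.U_all[of i] by simp
  note MP = B.main_prob[of \<delta> "\<lambda>i. (\<delta> / 2) ^ (i + 1)" p', unfolded cardA]
  have MP1: "{\<omega> \<in> space (sample_space A D). saba \<omega> A \<epsilon> \<delta> = astar} \<in> sets (sample_space A D)"
    by (rule MP(1)) (use q01 m0 pi U N0 pp cT1 in auto)
  have MP2: "measure (sample_space A D) {\<omega> \<in> space (sample_space A D). saba \<omega> A \<epsilon> \<delta> = astar} \<ge>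
      1 - ((\<Sum>i\<le>?t. ?d ^ (i + 1) + real (?c i) * ?d ^ (i + 1) / (real (?c (Suc i)) - real (?c i) * ?d ^ (i + 1))\<^sup>2) + p' + (?cT - 1) * p')"
    by (rule MP(2)) (use q01 m0 pi U N0 pp cT1 in auto)
  have gen: "\<delta> / (exp 1 * C) + (C - 1) * (\<delta> / (exp 1 * C)) = \<delta> / exp 1" if "C \<ge> 1" for C :: real
    using that by (simp add: field_simps)
  have "p' + (?cT - 1) * p' = \<delta> / exp 1" unfolding p'_def by (rule gen[OF cT1'])
  then have prob1: "measure (sample_space A D) {\<omega> \<in> space (sample_space A D). saba \<omega> A \<epsilon> \<delta> = astar} \<ge> 1 - \<delta>"
    using MP2 N.budget by linarith
  have card_agg: "card (agg_set \<omega> A \<epsilon> ?d i) = ?c i" for \<omega> i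
    using agg_set_card[OF finA, of ?d \<omega> \<epsilon> i] q01 cardA by simp
  have saba_in: "saba \<omega> A \<epsilon> \<delta> \<in> A" for \<omega>
  proof -
    define B where "B = agg_set \<omega> A \<epsilon> ?d (Suc ?t)"
    have BA: "B \<subseteq> A" unfolding B_def by (rule agg_set_sub[OF finA])
    have fB: "finite B" using BA finA finite_subset by blast
    have cB: "card B = ?c (Suc ?t)" unfolding B_def by (rule card_agg)
    have "card B \<ge> 1" using cT1 unfolding cB .
    then have Bne: "B \<noteq> {}" by auto
    have "saba \<omega> A \<epsilon> \<delta> = hd (rank_list (\<lambda>a. emp_mean \<omega> a (agg_off \<epsilon> ?d (Suc ?t)) (naive_N \<epsilon> (\<delta> / exp 1) (card B))) B)"
      by (simp add: saba_def naive_elim_def agg_elim_def B_def cardA)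
    also have "\<dots> \<in> B" by (rule rank_in[OF fB Bne])
    finally show ?thesis using BA by blast
  qed
  have seteq: "{\<omega> \<in> space (sample_space A D). arm_mean D astar - arm_mean D (saba \<omega> A \<epsilon> \<delta>) \<le> \<epsilon>}
      = {\<omega> \<in> space (sample_space A D). saba \<omega> A \<epsilon> \<delta> = astar}"
  proof (intro Collect_cong conj_cong refl iffI)
    fix \<omega> assume "arm_mean D astar - arm_mean D (saba \<omega> A \<epsilon> \<delta>) \<le> \<epsilon>"
    then show "saba \<omega> A \<epsilon> \<delta> = astar" using unique[OF saba_in[of \<omega>]] by force
  next
    fix \<omega> assume "saba \<omega> A \<epsilon> \<delta> = astar"
    then show "arm_mean D astar - arm_mean D (saba \<omega> A \<epsilon> \<delta>) \<le> \<epsilon>" using eps by simp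
  qed
  have eps1: "\<epsilon> \<le> 1"
  proof -
    have "card A \<ge> 2" using nlarge cardA by simp
    then obtain b where b: "b \<in> A" "b \<noteq> astar"
      by (metis One_nat_def card_le_Suc0_iff_eq finA best(1) not_less_eq_eq numeral_2_eq_2)
    have "arm_mean D astar \<le> 1" "arm_mean D b \<ge> 0"
      using mean01[OF distr borel supp] best(1) b(1) by (auto simp: arm_mean_def)
    then show ?thesis using unique[OF b] by linarith
  qed
  have samp: "real (saba_samples \<omega> A \<epsilon> \<delta>) \<le> 4 * real n / \<epsilon>\<^sup>2 * ln (1 / \<delta>)" for \<omega>
  proof -
    have "saba_samples \<omega> A \<epsilon> \<delta> = (\<Sum>i\<le>?t. ?c i * ((i + 1) * ?m)) + ?c (Suc ?t) * ?Nn"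
      by (simp add: saba_samples_def agg_samples_def naive_samples_def agg_elim_def card_agg cardA del: cs.simps agg_set.simps)
    then show ?thesis using N.samples_bound[OF eps eps1] by simp
  qed
  show ?thesis using prob1 seteq samp by simp
qed


end
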